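(* In the setting described in the context, let $\theta>0$ and $x,y\in\mathbb{R}$. Then $$\mathrm{TR}_N\longrightarrow\frac{9(x+y)^2(1+2e^{3\rho T})^2}{8\big(1-2e^{3\rho T}(5+3\rho T)\big)^2}+\frac{(x-y)^2}{8(\rho T+1)^2}\qquad(N\uparrow\infty).$$ Moreover, $$\liminf_{N\uparrow\infty}(\mathrm{TR}_N-\mathrm{TC}_N)=\frac{3(x+y)^2(2e^{3\rho T}+1)^2\big(3(\rho T+3)+2e^{6\rho T}(3\rho T+5)-e^{3\rho T}(12\rho T+19)\big)}{2\big(1-2e^{3\rho T}(3\rho T+5)\big)^2\big(3\rho T+e^{3\rho T}+2e^{6\rho T}(3\rho T+5)+7\big)},$$ and this expression is always nonnegative and is strictly positive if $x\ne-y$.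
   Context: Model: Let $(\Omega,(\mathscr F_t)_{t\ge0},\mathscr F,\mathbb P)$ be a filtered probability space with right-continuous filtration and trivial $\mathscr F_0$, $S^0$ a right-continuous martingale, $\rho,T>0$, $\theta\ge0$ (tax rate), and $\mathbb T_N=\{t_k=kT/N\}_{k=0}^N$, $N\ge2$. Admissible strategies for inventory $z$ are vectors $(\zeta_0,\dots,\zeta_N)$ of bounded random variables, $\zeta_k$ $\mathscr F_{t_k}$-measurable, $\sum\zeta_k=z$. With $S^{\bm\xi,\bm\eta}_t=S^0_t-\sum_{t_k<t}e^{-\rho(t-t_k)}(\xi_k+\eta_k)$ and $(\varepsilon_k)$ i.i.d. Bernoulli$(1/2)$ independent of $\sigma(\bigcup_t\mathscr F_t)$, the costs are $\mathscr C_{\mathbb T_N}(\bm\xi|\bm\eta)=xS^0_0+\sum_{k=0}^N(\frac12\xi_k^2-S^{\bm\xi,\bm\eta}_{t_k}\xi_k+\varepsilon_k\xi_k\eta_k+\theta\xi_k^2)$ and $\mathscr C_{\mathbb T_N}(\bm\eta|\bm\xi)=yS^0_0+\sum_{k=0}^N(\frac12\eta_k^2-S^{\bm\xi,\bm\eta}_{t_k}\eta_k+(1-\varepsilon_k)\xi_k\eta_k+\theta\eta_k^2)$. The unique Nash equilibrium (each strategy minimizes its expected cost given the other) is $\bm\xi^{(N)}=\frac12(x+y)\bm v+\frac12(x-y)\bm w$, $\bm\eta^{(N)}=\frac12(x+y)\bm v-\frac12(x-y)\bm w$, where $\bm v=\bm\nu/(\mathbf1^\top\bm\nu)$, $\bm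 w=\bm\omega/(\mathbf1^\top\bm\omega)$, $\bm\nu=(\Gamma+\tilde\Gamma+2\theta\mathrm{Id})^{-1}\mathbf1$, $\bm\omega=(\Gamma-\tilde\Gamma+2\theta\mathrm{Id})^{-1}\mathbf1$, $\tilde\Gamma$ the $(N+1)\times(N+1)$ lower triangular matrix with entries $1/2$ on the diagonal and $e^{-\rho(i-j)T/N}$ for $i>j$, and $\Gamma=\tilde\Gamma+\tilde\Gamma^\top$. Define the total tax revenues $\mathrm{TR}_N:=\theta(\bm\xi^{(N)})^\top\bm\xi^{(N)}+\theta(\bm\eta^{(N)})^\top\bm\eta^{(N)}$, the total costs $C_N(\theta):=\mathbb E[\mathscr C_{\mathbb T_N}(\bm\xi^{(N)}|\bm\eta^{(N)})]+\mathbb E[\mathscr C_{\mathbb T_N}(\bm\eta^{(N)}|\bm\xi^{(N)})]$ (the equilibrium being the one for tax rate $\theta$), and the total taxation costs $\mathrm{TC}_N:=C_N(\theta)-C_N(0)$. *)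

theory Defs
  imports Complex_Main "HOL-Library.Extended_Real" "Jordan_Normal_Form.Gauss_Jordan_Elimination"
begin

(* Time grid t_k = k T / N, k = 0..N.  Matrices are (N+1) x (N+1), indices 0..N. *)

definition GammaT :: "real \<Rightarrow> real \<Rightarrow> nat \<Rightarrow> real mat" where
  "GammaT \<rho> T N = mat (N+1) (N+1) (\<lambda>(i,j).
     if i = j then 1/2 else if j < i then exp (- \<rho> * (real i - real j) * T / real N) else 0)"

definition Gamma :: "real \<Rightarrow> real \<Rightarrow> nat \<Rightarrow> real mat" where
  "Gamma \<rho> T N = GammaT \<rho> T N + transpose_mat (GammaT \<rho> T N)"

definition ones :: "nat \<Rightarrow> real vec" where
  "ones N = vec (N+1) (\<lambda>_. 1)"

definition nu :: "real \<Rightarrow> real \<Rightarrow> real \<Rightarrow> nat \<Rightarrow> real vec" where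
  "nu \<rho> T \<theta> N = the (mat_inverse (Gamma \<rho> T N + GammaT \<rho> T N + (2*\<theta>) \<cdot>\<^sub>m 1\<^sub>m (N+1))) *\<^sub>v ones N"

definition omega :: "real \<Rightarrow> real \<Rightarrow> real \<Rightarrow> nat \<Rightarrow> real vec" where
  "omega \<rho> T \<theta> N = the (mat_inverse (Gamma \<rho> T N - GammaT \<rho> T N + (2*\<theta>) \<cdot>\<^sub>m 1\<^sub>m (N+1))) *\<^sub>v ones N"

definition vv :: "real \<Rightarrow> real \<Rightarrow> real \<Rightarrow> nat \<Rightarrow> real vec" where
  "vv \<rho> T \<theta> N = (1 / (\<Sum>k\<le>N. nu \<rho> T \<theta> N $ k)) \<cdot>\<^sub>v nu \<rho> T \<theta> N"

definition ww :: "real \<Rightarrow> real \<Rightarrow> real \<Rightarrow> nat \<Rightarrow> real vec" where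
  "ww \<rho> T \<theta> N = (1 / (\<Sum>k\<le>N. omega \<rho> T \<theta> N $ k)) \<cdot>\<^sub>v omega \<rho> T \<theta> N"

definition xiN :: "real \<Rightarrow> real \<Rightarrow> real \<Rightarrow> real \<Rightarrow> real \<Rightarrow> nat \<Rightarrow> nat \<Rightarrow> real" where
  "xiN \<rho> T \<theta> x y N k = (x+y)/2 * (vv \<rho> T \<theta> N $ k) + (x-y)/2 * (ww \<rho> T \<theta> N $ k)"

definition etaN :: "real \<Rightarrow> real \<Rightarrow> real \<Rightarrow> real \<Rightarrow> real \<Rightarrow> nat \<Rightarrow> nat \<Rightarrow> real" where
  "etaN \<rho> T \<theta> x y N k = (x+y)/2 * (vv \<rho> T \<theta> N $ k) - (x-y)/2 * (ww \<rho> T \<theta> N $ k)"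

(* Expected cost E[C_{T_N}(xi | eta)] of deterministic strategies xi, eta, with inventory z,
   where s0 = S^0_0.  Uses E[S^0_{t_k}] = S^0_0 (martingale property) and E[eps_k] = 1/2. *)
definition expCost :: "real \<Rightarrow> real \<Rightarrow> real \<Rightarrow> real \<Rightarrow> real \<Rightarrow> nat \<Rightarrow> (nat \<Rightarrow> real) \<Rightarrow> (nat \<Rightarrow> real) \<Rightarrow> real" where
  "expCost \<rho> T \<theta> s0 z N \<xi> \<eta> = z * s0 + (\<Sum>k\<le>N.
      1/2 * (\<xi> k)^2
      - (s0 - (\<Sum>j<k. exp (- \<rho> * (real k - real j) * T / real N) * (\<xi> j + \<eta> j))) * \<xi> k
      + 1/2 * \<xi> k * \<eta> k + \<theta> * (\<xi> k)^2)"

definition TR :: "real \<Rightarrow> real \<Rightarrow> real \<Rightarrow> real \<Rightarrow> real \<Rightarrow> nat \<Rightarrow> real" where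
  "TR \<rho> T \<theta> x y N = \<theta> * (\<Sum>k\<le>N. (xiN \<rho> T \<theta> x y N k)^2) + \<theta> * (\<Sum>k\<le>N. (etaN \<rho> T \<theta> x y N k)^2)"

definition totalCost :: "real \<Rightarrow> real \<Rightarrow> real \<Rightarrow> real \<Rightarrow> real \<Rightarrow> real \<Rightarrow> nat \<Rightarrow> real" where
  "totalCost \<rho> T \<theta> s0 x y N =
     expCost \<rho> T \<theta> s0 x N (xiN \<rho> T \<theta> x y N) (etaN \<rho> T \<theta> x y N)
   + expCost \<rho> T \<theta> s0 y N (etaN \<rho> T \<theta> x y N) (xiN \<rho> T \<theta> x y N)"

definition TC :: "real \<Rightarrow> real \<Rightarrow> real \<Rightarrow> real \<Rightarrow> real \<Rightarrow> real \<Rightarrow> nat \<Rightarrow> real" where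
  "TC \<rho> T \<theta> s0 x y N = totalCost \<rho> T \<theta> s0 x y N - totalCost \<rho> T 0 s0 x y N"

end

theory Submission
  imports Defs "Jordan_Normal_Form.Determinant"
begin


definition Fs :: "real \<Rightarrow> (nat \<Rightarrow> real) \<Rightarrow> nat \<Rightarrow> real" where
  "Fs a f i = (\<Sum>j<i. a^(i-j) * f j)"
definition Bs :: "real \<Rightarrow> nat \<Rightarrow> (nat \<Rightarrow> real) \<Rightarrow> nat \<Rightarrow> real" where
  "Bs a N f i = (\<Sum>j\<in>{i<..N}. a^(j-i) * f j)"

lemma Fs_0[simp]: "Fs a f 0 = 0" by (simp add: Fs_def)

lemma Fs_Suc: "Fs a f (Suc i) = a * Fs a f i + a * f i"
proof -
  have "Fs a f (Suc i) = (\<Sum>j<i. a^(Suc i-j) * f j) + a * f i"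
    by (simp add: Fs_def)
  also have "(\<Sum>j<i. a^(Suc i-j) * f j) = (\<Sum>j<i. a * (a^(i-j) * f j))"
    by (rule sum.cong) (auto simp: Suc_diff_le)
  finally show ?thesis by (simp add: Fs_def sum_distrib_left)
qed

lemma Bs_last[simp]: "Bs a N f N = 0" by (simp add: Bs_def)

lemma Bs_step: assumes "i < N" shows "Bs a N f i = a * f (Suc i) + a * Bs a N f (Suc i)"
proof -
  have e: "{i<..N} = insert (Suc i) {Suc i<..N}" using assms by auto
  have "Bs a N f i = a^(Suc i - i) * f (Suc i) + (\<Sum>j\<in>{Suc i<..N}. a^(j-i) * f j)"
    unfolding Bs_def e by (subst sum.insert) auto
  also have "(\<Sum>j\<in>{Suc i<..N}. a^(j-i) * f j) = (\<Sum>j\<in>{Suc i<..N}. a * (a^(j - Suc i) * f j))"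
    by (rule sum.cong) (auto simp: Suc_diff_Suc power_Suc[symmetric] simp del: power_Suc)
  finally show ?thesis by (simp add: Bs_def sum_distrib_left)
qed

lemma geoF: "(l - a) * Fs a (\<lambda>j. l^j) i = a * (l^i - a^i)"
proof (induction i)
  case (Suc i)
  have "(l - a) * Fs a (\<lambda>j. l^j) (Suc i) = a * ((l - a) * Fs a (\<lambda>j. l^j) i) + a*(l-a)*l^i"
    by (simp add: Fs_Suc algebra_simps)
  also have "\<dots> = a * (a * (l^i - a^i)) + a*(l-a)*l^i" by (simp only: Suc)
  finally show ?case by (simp add: algebra_simps)
qed simp

lemma geoB_aux: "N - i = k \<Longrightarrow> i \<le> N \<Longrightarrow> (1 - a*l) * Bs a N (\<lambda>j. l^j) i = a*l*(l^i - a^(N-i)*l^N)"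
proof (induction k arbitrary: i)
  case 0 then show ?case by simp
next
  case (Suc k)
  then have i: "i < N" "N - Suc i = k" by auto
  have IH: "(1 - a*l) * Bs a N (\<lambda>j. l^j) (Suc i) = a*l*(l^Suc i - a^(N-Suc i)*l^N)"
    using Suc.IH i by auto
  have aa: "a^(N-i) = a * a^(N - Suc i)" using i by (metis Suc_diff_Suc power_Suc)
  have "(1 - a*l) * Bs a N (\<lambda>j. l^j) i = a*l^Suc i*(1-a*l) + a*((1 - a*l) * Bs a N (\<lambda>j. l^j) (Suc i))"
    unfolding Bs_step[OF i(1)] by (simp add: algebra_simps)
  also have "\<dots> = a*l^Suc i*(1-a*l) + a*(a*l*(l^Suc i - a^(N-Suc i)*l^N))" by (simp only: IH)
  finally show ?case unfolding aa by (simp add: algebra_simps)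
qed

lemma geoB: "i \<le> N \<Longrightarrow> (1 - a*l) * Bs a N (\<lambda>j. l^j) i = a*l*(l^i - a^(N-i)*l^N)"
  using geoB_aux by blast

lemma geoBrev_aux: "N - i = k \<Longrightarrow> i \<le> N \<Longrightarrow> (m - a) * Bs a N (\<lambda>j. m^(N-j)) i = a*(m^(N-i) - a^(N-i))"
proof (induction k arbitrary: i)
  case 0 then show ?case by simp
next
  case (Suc k)
  then have i: "i < N" "N - Suc i = k" by auto
  have IH: "(m - a) * Bs a N (\<lambda>j. m^(N-j)) (Suc i) = a*(m^(N-Suc i) - a^(N-Suc i))"
    using Suc.IH i by auto
  have aa: "a^(N-i) = a * a^(N - Suc i)" "m^(N-i) = m * m^(N - Suc i)" using i by (metis Suc_diff_Suc power_Suc)+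
  have "(m - a) * Bs a N (\<lambda>j. m^(N-j)) i = a*m^(N - Suc i)*(m-a) + a*((m - a) * Bs a N (\<lambda>j. m^(N-j)) (Suc i))"
    unfolding Bs_step[OF i(1)] by (simp add: algebra_simps)
  also have "\<dots> = a*m^(N - Suc i)*(m-a) + a*(a*(m^(N-Suc i) - a^(N-Suc i)))" by (simp only: IH)
  finally show ?case unfolding aa by (simp add: algebra_simps)
qed

lemma geoBrev: "i \<le> N \<Longrightarrow> (m - a) * Bs a N (\<lambda>j. m^(N-j)) i = a*(m^(N-i) - a^(N-i))"
  using geoBrev_aux by blast

lemma Fs_lin: "Fs a (\<lambda>j. c0 + c1 * f j + c2 * g j) i = c0 * Fs a (\<lambda>j. 1) i + c1 * Fs a f i + c2 * Fs a g i"
  by (simp add: Fs_def sum.distrib sum_distrib_left algebra_simps)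
lemma Bs_lin: "Bs a N (\<lambda>j. c0 + c1 * f j + c2 * g j) i = c0 * Bs a N (\<lambda>j. 1) i + c1 * Bs a N f i + c2 * Bs a N g i"
  by (simp add: Bs_def sum.distrib sum_distrib_left algebra_simps)

lemma sum_Bs_Fs: "(\<Sum>k\<le>N. f k * Bs a N f k) = (\<Sum>k\<le>N. f k * Fs a f k)"
proof (induction N)
  case 0 then show ?case by (simp add: Bs_def)
next
  case (Suc N)
  have B: "Bs a (Suc N) f k = Bs a N f k + a^(Suc N - k) * f (Suc N)" if "k \<le> N" for k
  proof -
    have "{k<..Suc N} = insert (Suc N) {k<..N}" using that by auto
    then show ?thesis unfolding Bs_def by (simp add: add.commute)
  qed
  have "(\<Sum>k\<le>Suc N. f k * Bs a (Suc N) f k) = (\<Sum>k\<le>N. f k * Bs a (Suc N) f k)"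
    by (simp add: Bs_def)
  also have "\<dots> = (\<Sum>k\<le>N. f k * Bs a N f k) + (\<Sum>k\<le>N. f k * (a^(Suc N - k) * f (Suc N)))"
    by (simp add: B sum.distrib distrib_left)
  also have "\<dots> = (\<Sum>k\<le>N. f k * Fs a f k) + f (Suc N) * Fs a f (Suc N)"
    by (simp add: Suc Fs_def sum_distrib_left lessThan_Suc_atMost mult_ac)
  finally show ?case by simp
qed


definition aN :: "real \<Rightarrow> real \<Rightarrow> nat \<Rightarrow> real" where
  "aN \<rho> T N = exp (- \<rho> * T / real N)"

lemma exp_entry: "j \<le> i \<Longrightarrow> exp (- \<rho> * (real i - real j) * T / real N) = aN \<rho> T N ^ (i - j)"
proof -
  assume "j \<le> i"
  then have "- \<rho> * (real i - real j) * T / real N = real (i - j) * (- \<rho> * T / real N)"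
    by (simp add: of_nat_diff)
  then show ?thesis unfolding aN_def by (simp only: exp_of_nat_mult)
qed

lemma exp_entry': "j \<le> i \<Longrightarrow> exp (- (\<rho> * (real i - real j) * T / real N)) = aN \<rho> T N ^ (i - j)"
  using exp_entry by simp

definition Mnu where "Mnu \<rho> T \<theta> N = Gamma \<rho> T N + GammaT \<rho> T N + (2*\<theta>) \<cdot>\<^sub>m 1\<^sub>m (N+1)"
definition Mom where "Mom \<rho> T \<theta> N = Gamma \<rho> T N - GammaT \<rho> T N + (2*\<theta>) \<cdot>\<^sub>m 1\<^sub>m (N+1)"

lemma Mnu_carrier: "Mnu \<rho> T \<theta> N \<in> carrier_mat (N+1) (N+1)"
  by (simp add: Mnu_def Gamma_def GammaT_def)
lemma Mom_carrier: "Mom \<rho> T \<theta> N \<in> carrier_mat (N+1) (N+1)"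
  by (simp add: Mom_def Gamma_def GammaT_def)

lemma Mnu_entry: assumes "i \<le> N" "j \<le> N"
  shows "Mnu \<rho> T \<theta> N $$ (i,j) = (if j < i then 2 * aN \<rho> T N ^ (i-j) else if j = i then 3/2 + 2*\<theta> else aN \<rho> T N ^ (j-i))"
  using assms by (auto simp: Mnu_def Gamma_def GammaT_def exp_entry')

lemma Mom_entry: assumes "i \<le> N" "j \<le> N"
  shows "Mom \<rho> T \<theta> N $$ (i,j) = (if j < i then 0 else if j = i then 1/2 + 2*\<theta> else aN \<rho> T N ^ (j-i))"
  using assms by (auto simp: Mom_def Gamma_def GammaT_def exp_entry')

lemma sum_split3:
  fixes i N :: nat
  assumes "i \<le> N"
  shows "(\<Sum>j\<in>{0..<N+1}. (if j < i then g1 j else if j = i then g2 j else g3 j)) =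
    (\<Sum>j<i. g1 j) + g2 i + (\<Sum>j\<in>{i<..N}. g3 j)"
proof -
  have e: "{0..<N+1} = {..<i} \<union> ({i} \<union> {i<..N})" using assms by auto
  let ?h = "\<lambda>j. (if j < i then g1 j else if j = i then g2 j else g3 j)"
  have "sum ?h ({..<i} \<union> ({i} \<union> {i<..N})) = sum ?h {..<i} + sum ?h ({i} \<union> {i<..N})"
    by (rule sum.union_disjoint) auto
  also have "sum ?h ({i} \<union> {i<..N}) = sum ?h {i} + sum ?h {i<..N}"
    by (rule sum.union_disjoint) auto
  also have "sum ?h {..<i} = (\<Sum>j<i. g1 j)" by (rule sum.cong) auto
  also have "sum ?h {i<..N} = (\<Sum>j\<in>{i<..N}. g3 j)" by (rule sum.cong) auto
  finally have X: "sum ?h ({..<i} \<union> ({i} \<union> {i<..N})) = (\<Sum>j<i. g1 j) + (g2 i + (\<Sum>j\<in>{i<..N}. g3 j))" by simp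
  show ?thesis unfolding e using X by (simp add: add.assoc)
qed

lemma Mnu_mult: assumes "i \<le> N"
  shows "(Mnu \<rho> T \<theta> N *\<^sub>v vec (N+1) f) $ i
    = 2 * Fs (aN \<rho> T N) f i + Bs (aN \<rho> T N) N f i + (3/2 + 2*\<theta>) * f i"
proof -
  have "(Mnu \<rho> T \<theta> N *\<^sub>v vec (N+1) f) $ i = (\<Sum>j\<in>{0..<N+1}. Mnu \<rho> T \<theta> N $$ (i,j) * f j)"
    using assms Mnu_carrier[of \<rho> T \<theta> N] by (simp add: scalar_prod_def)
  also have "\<dots> = (\<Sum>j\<in>{0..<N+1}. (if j < i then 2 * aN \<rho> T N ^ (i-j) * f j else if j = i then (3/2 + 2*\<theta>) * f j else aN \<rho> T N ^ (j-i) * f j))"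
    by (rule sum.cong) (use assms in \<open>auto simp: Mnu_entry\<close>)
  also have "\<dots> = 2 * Fs (aN \<rho> T N) f i + Bs (aN \<rho> T N) N f i + (3/2 + 2*\<theta>) * f i"
    by (subst sum_split3[OF assms]) (simp add: Fs_def Bs_def sum_distrib_left mult_ac)
  finally show ?thesis .
qed

lemma Mom_mult: assumes "i \<le> N"
  shows "(Mom \<rho> T \<theta> N *\<^sub>v vec (N+1) f) $ i
    = Bs (aN \<rho> T N) N f i + (1/2 + 2*\<theta>) * f i"
proof -
  have "(Mom \<rho> T \<theta> N *\<^sub>v vec (N+1) f) $ i = (\<Sum>j\<in>{0..<N+1}. Mom \<rho> T \<theta> N $$ (i,j) * f j)"
    using assms Mom_carrier[of \<rho> T \<theta> N] by (simp add: scalar_prod_def)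
  also have "\<dots> = (\<Sum>j\<in>{0..<N+1}. (if j < i then 0 else if j = i then (1/2 + 2*\<theta>) * f j else aN \<rho> T N ^ (j-i) * f j))"
    by (rule sum.cong) (use assms in \<open>auto simp: Mom_entry\<close>)
  also have "\<dots> = Bs (aN \<rho> T N) N f i + (1/2 + 2*\<theta>) * f i"
    by (subst sum_split3[OF assms]) (simp add: Bs_def)
  finally show ?thesis .
qed

definition Ys where "Ys a f i = Fs a f i + f i"

lemma quad_telescope:
  "(\<Sum>i\<le>n. 2 * f i * Fs a f i + (f i)^2) = (Ys a f n)^2 + (1 - a^2) * (\<Sum>i<n. (Ys a f i)^2)"
proof (induction n)
  case 0 then show ?case by (simp add: Ys_def)
next
  case (Suc n)
  have F: "Fs a f (Suc n) = a * Ys a f n" by (simp add: Fs_Suc Ys_def algebra_simps)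
  have "(\<Sum>i\<le>Suc n. 2 * f i * Fs a f i + (f i)^2) = (Ys a f n)^2 + (1 - a^2) * (\<Sum>i<n. (Ys a f i)^2)
      + (2 * f (Suc n) * Fs a f (Suc n) + (f (Suc n))^2)" by (simp add: Suc)
  also have "\<dots> = (Ys a f (Suc n))^2 + (1 - a^2) * (\<Sum>i<Suc n. (Ys a f i)^2)"
    by (simp add: Ys_def F power2_eq_square algebra_simps)
  finally show ?case .
qed

lemma quad_zero:
  assumes a: "0 < a" "a < 1" and z: "(\<Sum>i\<le>N. 2 * f i * Fs a f i + (f i)^2) \<le> 0" and i: "i \<le> N"
  shows "f i = 0"
proof -
  have pos: "0 < 1 - a^2" using a by (simp add: power_less_one_iff abs_if)
  have s0: "0 \<le> (\<Sum>i<N. (Ys a f i)^2)" by (simp add: sum_nonneg)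
  have "(Ys a f N)^2 + (1 - a^2) * (\<Sum>i<N. (Ys a f i)^2) \<le> 0" using z quad_telescope by metis
  then have h1: "(Ys a f N)^2 = 0" and h2: "(1 - a^2) * (\<Sum>i<N. (Ys a f i)^2) = 0"
    using s0 pos by (smt (verit) mult_nonneg_nonneg zero_le_power2)+
  then have "(\<Sum>i<N. (Ys a f i)^2) = 0" using pos by simp
  then have "\<forall>i<N. (Ys a f i)^2 = 0" by (subst (asm) sum_nonneg_eq_0_iff) auto
  with h1 have Y: "\<And>i. i \<le> N \<Longrightarrow> Ys a f i = 0" by (metis le_neq_implies_less power_eq_0_iff zero_neq_numeral)
  show ?thesis
  proof (cases i)
    case 0 then show ?thesis using Y[of 0] by (simp add: Ys_def)
  next
    case (Suc k)
    then have "Fs a f i = a * Ys a f k" by (simp add: Fs_Suc Ys_def algebra_simps)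
    then show ?thesis using Y[of k] Y[of i] i Suc by (simp add: Ys_def)
  qed
qed

lemma sum_f_M:
  "(\<Sum>i\<le>N. f i * (c * Fs a f i + Bs a N f i + g * f i)) =
   (c+1)/2 * (\<Sum>i\<le>N. 2 * f i * Fs a f i + (f i)^2) + (g - (c+1)/2) * (\<Sum>i\<le>N. (f i)^2)"
proof -
  have "(\<Sum>i\<le>N. f i * (c * Fs a f i + Bs a N f i + g * f i)) =
     c * (\<Sum>i\<le>N. f i * Fs a f i) + (\<Sum>i\<le>N. f i * Bs a N f i) + g * (\<Sum>i\<le>N. (f i)^2)"
    by (simp add: sum.distrib sum_distrib_left algebra_simps power2_eq_square)
  also have "\<dots> = (c+1) * (\<Sum>i\<le>N. f i * Fs a f i) + g * (\<Sum>i\<le>N. (f i)^2)"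
    by (simp add: sum_Bs_Fs algebra_simps)
  also have "\<dots> = (c+1)/2 * (\<Sum>i\<le>N. 2 * f i * Fs a f i + (f i)^2) + (g - (c+1)/2) * (\<Sum>i\<le>N. (f i)^2)"
  proof -
    have "(\<Sum>i\<le>N. 2 * f i * Fs a f i + (f i)^2) = 2 * (\<Sum>i\<le>N. f i * Fs a f i) + (\<Sum>i\<le>N. (f i)^2)"
      by (simp add: sum.distrib sum_distrib_left mult.assoc)
    then show ?thesis by (simp add: algebra_simps)
  qed
  finally show ?thesis .
qed

lemma kernel_trivial:
  assumes a: "0 < a" "a < 1" and c: "c \<ge> 0" "g \<ge> (c+1)/2"
    and M: "\<And>i. i \<le> N \<Longrightarrow> c * Fs a f i + Bs a N f i + g * f i = 0" and i: "i \<le> N"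
  shows "f i = 0"
proof -
  have "(\<Sum>i\<le>N. f i * (c * Fs a f i + Bs a N f i + g * f i)) = 0" using M by simp
  then have e: "(c+1)/2 * (\<Sum>i\<le>N. 2 * f i * Fs a f i + (f i)^2) + (g - (c+1)/2) * (\<Sum>i\<le>N. (f i)^2) = 0"
    by (simp add: sum_f_M)
  have q: "0 \<le> (\<Sum>i\<le>N. 2 * f i * Fs a f i + (f i)^2)"
    using quad_telescope[of f a N] a by (simp add: sum_nonneg power_le_one abs_le_iff)
  have q2: "0 \<le> (g - (c+1)/2) * (\<Sum>i\<le>N. (f i)^2)" using c by (simp add: sum_nonneg)
  have "(c+1)/2 * (\<Sum>i\<le>N. 2 * f i * Fs a f i + (f i)^2) \<le> 0" using e q2 by linarith
  then have "(\<Sum>i\<le>N. 2 * f i * Fs a f i + (f i)^2) \<le> 0" using c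
    by (simp add: mult_le_0_iff)
  then show ?thesis using quad_zero[OF a _ i] by blast
qed


lemma aN_bounds: assumes "\<rho> > 0" "T > 0" "N > 0" shows "0 < aN \<rho> T N" "aN \<rho> T N < 1"
  using assms by (auto simp: aN_def)

lemma Mnu_inv:
  assumes "\<rho> > 0" "T > 0" "N > 0" "\<theta> \<ge> 0"
  shows "\<exists>B. mat_inverse (Mnu \<rho> T \<theta> N) = Some B \<and> B * Mnu \<rho> T \<theta> N = 1\<^sub>m (N+1) \<and> B \<in> carrier_mat (N+1) (N+1)"
proof -
  let ?M = "Mnu \<rho> T \<theta> N"
  have C: "?M \<in> carrier_mat (N+1) (N+1)" by (rule Mnu_carrier)
  have "det ?M \<noteq> 0"
  proof
    assume "det ?M = 0"
    then obtain v where v: "v \<in> carrier_vec (N+1)" "v \<noteq> 0\<^sub>v (N+1)" "?M *\<^sub>v v = 0\<^sub>v (N+1)"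
      using det_0_iff_vec_prod_zero[OF C] by blast
    have vv: "v = vec (N+1) (\<lambda>j. v $ j)" using v(1) by auto
    have eq: "2 * Fs (aN \<rho> T N) (\<lambda>j. v $ j) i + Bs (aN \<rho> T N) N (\<lambda>j. v $ j) i + (3/2 + 2*\<theta>) * v $ i = 0"
      if "i \<le> N" for i
    proof -
      have "(?M *\<^sub>v vec (N+1) (\<lambda>j. v $ j)) $ i = 0" using v(3) vv that by (metis index_zero_vec(1) le_imp_less_Suc Suc_eq_plus1)
      then show ?thesis using Mnu_mult[OF that] by simp
    qed
    have "v $ i = 0" if "i \<le> N" for i
      by (rule kernel_trivial[where c=2 and g="3/2 + 2*\<theta>" and N=N and a="aN \<rho> T N"])
         (use aN_bounds[OF assms(1-3)] assms(4) eq that in auto)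
    then have "v = 0\<^sub>v (N+1)" using v(1) by (intro eq_vecI) auto
    then show False using v(2) by simp
  qed
  then have U: "?M \<in> Units (ring_mat TYPE(real) (N+1) undefined)"
    by (rule det_non_zero_imp_unit[OF C])
  have "mat_inverse ?M \<noteq> None" using mat_inverse(1)[OF C, of undefined] U by blast
  then obtain B where B: "mat_inverse ?M = Some B" by blast
  then show ?thesis using mat_inverse(2)[OF C B] by auto
qed

lemma Mom_inv:
  assumes "\<rho> > 0" "T > 0" "N > 0" "\<theta> \<ge> 0"
  shows "\<exists>B. mat_inverse (Mom \<rho> T \<theta> N) = Some B \<and> B * Mom \<rho> T \<theta> N = 1\<^sub>m (N+1) \<and> B \<in> carrier_mat (N+1) (N+1)"
proof -
  let ?M = "Mom \<rho> T \<theta> N"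
  have C: "?M \<in> carrier_mat (N+1) (N+1)" by (rule Mom_carrier)
  have "det ?M \<noteq> 0"
  proof
    assume "det ?M = 0"
    then obtain v where v: "v \<in> carrier_vec (N+1)" "v \<noteq> 0\<^sub>v (N+1)" "?M *\<^sub>v v = 0\<^sub>v (N+1)"
      using det_0_iff_vec_prod_zero[OF C] by blast
    have vv: "v = vec (N+1) (\<lambda>j. v $ j)" using v(1) by auto
    have eq: "0 * Fs (aN \<rho> T N) (\<lambda>j. v $ j) i + Bs (aN \<rho> T N) N (\<lambda>j. v $ j) i + (1/2 + 2*\<theta>) * v $ i = 0"
      if "i \<le> N" for i
    proof -
      have "(?M *\<^sub>v vec (N+1) (\<lambda>j. v $ j)) $ i = 0" using v(3) vv that by (metis index_zero_vec(1) le_imp_less_Suc Suc_eq_plus1)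
      then show ?thesis using Mom_mult[OF that] by simp
    qed
    have "v $ i = 0" if "i \<le> N" for i
      by (rule kernel_trivial[where c=0 and g="1/2 + 2*\<theta>" and N=N and a="aN \<rho> T N"])
         (use aN_bounds[OF assms(1-3)] assms(4) eq that in auto)
    then have "v = 0\<^sub>v (N+1)" using v(1) by (intro eq_vecI) auto
    then show False using v(2) by simp
  qed
  then have U: "?M \<in> Units (ring_mat TYPE(real) (N+1) undefined)"
    by (rule det_non_zero_imp_unit[OF C])
  have "mat_inverse ?M \<noteq> None" using mat_inverse(1)[OF C, of undefined] U by blast
  then obtain B where B: "mat_inverse ?M = Some B" by blast
  then show ?thesis using mat_inverse(2)[OF C B] by auto
qed

lemma nu_eq:
  assumes "\<rho> > 0" "T > 0" "N > 0" "\<theta> \<ge> 0"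
    and f: "\<And>i. i \<le> N \<Longrightarrow> 2 * Fs (aN \<rho> T N) f i + Bs (aN \<rho> T N) N f i + (3/2 + 2*\<theta>) * f i = 1"
    and k: "k \<le> N"
  shows "nu \<rho> T \<theta> N $ k = f k"
proof -
  obtain B where B: "mat_inverse (Mnu \<rho> T \<theta> N) = Some B" "B * Mnu \<rho> T \<theta> N = 1\<^sub>m (N+1)" "B \<in> carrier_mat (N+1) (N+1)"
    using Mnu_inv[OF assms(1-4)] by blast
  have e1: "(Mnu \<rho> T \<theta> N *\<^sub>v vec (N+1) f) $ i = 1" if "i \<le> N" for i
    using Mnu_mult[OF that] f[OF that] by simp
  have o: "ones N = Mnu \<rho> T \<theta> N *\<^sub>v vec (N+1) f"
    by (rule eq_vecI) (use e1 Mnu_carrier[of \<rho> T \<theta> N] in \<open>auto simp: ones_def less_Suc_eq_le simp del: index_mult_mat_vec\<close>)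
  have "nu \<rho> T \<theta> N = B *\<^sub>v (Mnu \<rho> T \<theta> N *\<^sub>v vec (N+1) f)"
    unfolding nu_def Mnu_def[symmetric] B(1) o by simp
  also have "\<dots> = (B * Mnu \<rho> T \<theta> N) *\<^sub>v vec (N+1) f"
    using B(3) Mnu_carrier by (subst assoc_mult_mat_vec) auto
  also have "\<dots> = vec (N+1) f" unfolding B(2) by simp
  finally show ?thesis using k by simp
qed

lemma omega_eq:
  assumes "\<rho> > 0" "T > 0" "N > 0" "\<theta> \<ge> 0"
    and f: "\<And>i. i \<le> N \<Longrightarrow> Bs (aN \<rho> T N) N f i + (1/2 + 2*\<theta>) * f i = 1"
    and k: "k \<le> N"
  shows "omega \<rho> T \<theta> N $ k = f k"
proof -
  obtain B where B: "mat_inverse (Mom \<rho> T \<theta> N) = Some B" "B * Mom \<rho> T \<theta> N = 1\<^sub>m (N+1)" "B \<in> carrier_mat (N+1) (N+1)"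
    using Mom_inv[OF assms(1-4)] by blast
  have e1: "(Mom \<rho> T \<theta> N *\<^sub>v vec (N+1) f) $ i = 1" if "i \<le> N" for i
    using Mom_mult[OF that] f[OF that] by simp
  have o: "ones N = Mom \<rho> T \<theta> N *\<^sub>v vec (N+1) f"
    by (rule eq_vecI) (use e1 Mom_carrier[of \<rho> T \<theta> N] in \<open>auto simp: ones_def less_Suc_eq_le simp del: index_mult_mat_vec\<close>)
  have "omega \<rho> T \<theta> N = B *\<^sub>v (Mom \<rho> T \<theta> N *\<^sub>v vec (N+1) f)"
    unfolding omega_def Mom_def[symmetric] B(1) o by simp
  also have "\<dots> = (B * Mom \<rho> T \<theta> N) *\<^sub>v vec (N+1) f"
    using B(3) Mom_carrier by (subst assoc_mult_mat_vec) auto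
  also have "\<dots> = vec (N+1) f" unfolding B(2) by simp
  finally show ?thesis using k by simp
qed

lemma nu_sol:
  assumes "\<rho> > 0" "T > 0" "N > 0" "\<theta> \<ge> 0"
  shows "dim_vec (nu \<rho> T \<theta> N) = N+1"
    "\<And>i. i \<le> N \<Longrightarrow> 2 * Fs (aN \<rho> T N) (\<lambda>k. nu \<rho> T \<theta> N $ k) i + Bs (aN \<rho> T N) N (\<lambda>k. nu \<rho> T \<theta> N $ k) i
        + (3/2 + 2*\<theta>) * nu \<rho> T \<theta> N $ i = 1"
proof -
  obtain B where B: "mat_inverse (Mnu \<rho> T \<theta> N) = Some B" "B \<in> carrier_mat (N+1) (N+1)"
    using Mnu_inv[OF assms(1-4)] by blast
  have MB: "Mnu \<rho> T \<theta> N * B = 1\<^sub>m (N+1)" using mat_inverse(2)[OF Mnu_carrier B(1)] by simp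
  have n: "nu \<rho> T \<theta> N = B *\<^sub>v ones N" unfolding nu_def Mnu_def[symmetric] B(1) by simp
  show d: "dim_vec (nu \<rho> T \<theta> N) = N+1" using n B(2) by simp
  have on: "ones N \<in> carrier_vec (N+1)" by (simp add: ones_def)
  have "Mnu \<rho> T \<theta> N *\<^sub>v nu \<rho> T \<theta> N = ones N"
    unfolding n using B(2) Mnu_carrier on by (subst assoc_mult_mat_vec[symmetric]) (auto simp: MB)
  moreover have "nu \<rho> T \<theta> N = vec (N+1) (\<lambda>k. nu \<rho> T \<theta> N $ k)" using d by auto
  ultimately have e: "Mnu \<rho> T \<theta> N *\<^sub>v vec (N+1) (\<lambda>k. nu \<rho> T \<theta> N $ k) = ones N" by simp
  fix i assume i: "i \<le> N"
  show "2 * Fs (aN \<rho> T N) (\<lambda>k. nu \<rho> T \<theta> N $ k) i + Bs (aN \<rho> T N) N (\<lambda>k. nu \<rho> T \<theta> N $ k) i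
        + (3/2 + 2*\<theta>) * nu \<rho> T \<theta> N $ i = 1"
    using arg_cong[OF e, of "\<lambda>v. v $ i"] Mnu_mult[OF i] i by (simp add: ones_def)
qed

lemma omega_dim:
  assumes "\<rho> > 0" "T > 0" "N > 0" "\<theta> \<ge> 0"
  shows "dim_vec (omega \<rho> T \<theta> N) = N+1"
proof -
  obtain B where B: "mat_inverse (Mom \<rho> T \<theta> N) = Some B" "B \<in> carrier_mat (N+1) (N+1)"
    using Mom_inv[OF assms(1-4)] by blast
  show ?thesis unfolding omega_def Mom_def[symmetric] B(1) using B(2) by simp
qed


definition Sn where "Sn \<rho> T \<theta> N = (\<Sum>k\<le>N. nu \<rho> T \<theta> N $ k)"
definition Rn where "Rn \<rho> T \<theta> N = (\<Sum>k\<le>N. (nu \<rho> T \<theta> N $ k)^2)"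
definition So where "So \<rho> T \<theta> N = (\<Sum>k\<le>N. omega \<rho> T \<theta> N $ k)"
definition Ro where "Ro \<rho> T \<theta> N = (\<Sum>k\<le>N. (omega \<rho> T \<theta> N $ k)^2)"

lemma vv_idx: assumes "\<rho> > 0" "T > 0" "N > 0" "\<theta> \<ge> 0" "k \<le> N"
  shows "vv \<rho> T \<theta> N $ k = nu \<rho> T \<theta> N $ k / Sn \<rho> T \<theta> N"
  using nu_sol(1)[OF assms(1-4)] assms(5) by (simp add: vv_def Sn_def)

lemma ww_idx: assumes "\<rho> > 0" "T > 0" "N > 0" "\<theta> \<ge> 0" "k \<le> N"
  shows "ww \<rho> T \<theta> N $ k = omega \<rho> T \<theta> N $ k / So \<rho> T \<theta> N"
  using omega_dim[OF assms(1-4)] assms(5) by (simp add: ww_def So_def)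

lemma TR_formula:
  assumes "\<rho> > 0" "T > 0" "N > 0" "\<theta> \<ge> 0"
  shows "TR \<rho> T \<theta> x y N = \<theta> * ((x+y)^2/2 * (Rn \<rho> T \<theta> N / (Sn \<rho> T \<theta> N)^2)
                                + (x-y)^2/2 * (Ro \<rho> T \<theta> N / (So \<rho> T \<theta> N)^2))"
proof -
  have "(\<Sum>k\<le>N. (xiN \<rho> T \<theta> x y N k)^2) + (\<Sum>k\<le>N. (etaN \<rho> T \<theta> x y N k)^2)
     = (\<Sum>k\<le>N. (x+y)^2/2 * (nu \<rho> T \<theta> N $ k)^2 / (Sn \<rho> T \<theta> N)^2
                + (x-y)^2/2 * (omega \<rho> T \<theta> N $ k)^2 / (So \<rho> T \<theta> N)^2)"
    unfolding sum.distrib[symmetric]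
  proof (rule sum.cong)
    fix k assume "k \<in> {..N}"
    then have k: "k \<le> N" by simp
    have pq: "(p+q)^2 + (p-q)^2 = 2*p^2 + 2*q^2" for p q :: real by (simp add: power2_eq_square algebra_simps)
    show "(xiN \<rho> T \<theta> x y N k)^2 + (etaN \<rho> T \<theta> x y N k)^2 = (x+y)^2/2 * (nu \<rho> T \<theta> N $ k)^2 / (Sn \<rho> T \<theta> N)^2
                + (x-y)^2/2 * (omega \<rho> T \<theta> N $ k)^2 / (So \<rho> T \<theta> N)^2"
      unfolding xiN_def etaN_def pq vv_idx[OF assms k] ww_idx[OF assms k]
      by (simp add: power_mult_distrib power_divide)
  qed simp
  also have "\<dots> = (x+y)^2/2 * (Rn \<rho> T \<theta> N / (Sn \<rho> T \<theta> N)^2)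
                                + (x-y)^2/2 * (Ro \<rho> T \<theta> N / (So \<rho> T \<theta> N)^2)"
    by (simp add: Rn_def Ro_def sum.distrib sum_divide_distrib sum_distrib_left)
  finally show ?thesis unfolding TR_def by (simp add: distrib_left[symmetric])
qed

lemma expCost_Fs:
  "expCost \<rho> T \<theta> s0 z N \<xi> \<eta> = z * s0 - s0 * (\<Sum>k\<le>N. \<xi> k) +
     (\<Sum>k\<le>N. 1/2 * (\<xi> k)^2 + \<xi> k * Fs (aN \<rho> T N) (\<lambda>j. \<xi> j + \<eta> j) k + 1/2 * \<xi> k * \<eta> k + \<theta> * (\<xi> k)^2)"
proof -
  have i: "(\<Sum>j<k. exp (- \<rho> * (real k - real j) * T / real N) * (\<xi> j + \<eta> j)) = Fs (aN \<rho> T N) (\<lambda>j. \<xi> j + \<eta> j) k" for k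
    unfolding Fs_def by (rule sum.cong) (auto simp: exp_entry')
  show ?thesis unfolding expCost_def i
    by (simp add: sum.distrib sum_distrib_left sum_subtractf algebra_simps)
qed

lemma Fs_scale: "Fs a (\<lambda>j. c * f j) k = c * Fs a f k"
  by (simp add: Fs_def sum_distrib_left mult_ac)

lemma Fs_cong: "(\<And>j. j < k \<Longrightarrow> f j = g j) \<Longrightarrow> Fs a f k = Fs a g k"
  by (simp add: Fs_def)

lemma sum_nu_F:
  assumes "\<rho> > 0" "T > 0" "N > 0" "\<theta> \<ge> 0"
  shows "(\<Sum>k\<le>N. nu \<rho> T \<theta> N $ k * Fs (aN \<rho> T N) (\<lambda>j. nu \<rho> T \<theta> N $ j) k)
     = (Sn \<rho> T \<theta> N - (3/2 + 2*\<theta>) * Rn \<rho> T \<theta> N) / 3"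
proof -
  let ?f = "\<lambda>k. nu \<rho> T \<theta> N $ k" and ?a = "aN \<rho> T N"
  have "Sn \<rho> T \<theta> N = (\<Sum>k\<le>N. ?f k * (2 * Fs ?a ?f k + Bs ?a N ?f k + (3/2 + 2*\<theta>) * ?f k))"
    unfolding Sn_def by (rule sum.cong) (auto simp: nu_sol(2)[OF assms])
  also have "\<dots> = 2 * (\<Sum>k\<le>N. ?f k * Fs ?a ?f k) + (\<Sum>k\<le>N. ?f k * Bs ?a N ?f k) + (3/2 + 2*\<theta>) * Rn \<rho> T \<theta> N"
    by (simp add: Rn_def sum.distrib sum_distrib_left algebra_simps power2_eq_square)
  also have "\<dots> = 3 * (\<Sum>k\<le>N. ?f k * Fs ?a ?f k) + (3/2 + 2*\<theta>) * Rn \<rho> T \<theta> N"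
    by (simp add: sum_Bs_Fs)
  finally show ?thesis by simp
qed

lemma totalCost_formula:
  assumes "\<rho> > 0" "T > 0" "N > 0" "\<theta> \<ge> 0" "Sn \<rho> T \<theta> N \<noteq> 0"
  shows "totalCost \<rho> T \<theta> s0 x y N = (x+y)^2 * (1 / (3 * Sn \<rho> T \<theta> N) - 2 * \<theta> * Rn \<rho> T \<theta> N / (3 * (Sn \<rho> T \<theta> N)^2))
      + TR \<rho> T \<theta> x y N"
proof -
  let ?f = "\<lambda>k. nu \<rho> T \<theta> N $ k" and ?a = "aN \<rho> T N" and ?S = "Sn \<rho> T \<theta> N"
  let ?xi = "xiN \<rho> T \<theta> x y N" and ?eta = "etaN \<rho> T \<theta> x y N"
  have z: "?xi k + ?eta k = (x+y) / ?S * ?f k" if "k \<le> N" for k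
    using that by (simp add: xiN_def etaN_def vv_idx[OF assms(1-4)])
  have Fz: "Fs ?a (\<lambda>j. ?xi j + ?eta j) k = (x+y) / ?S * Fs ?a ?f k" if "k \<le> N" for k
  proof -
    have "Fs ?a (\<lambda>j. ?xi j + ?eta j) k = Fs ?a (\<lambda>j. (x+y) / ?S * ?f j) k"
      by (rule Fs_cong) (use that z in auto)
    also have "\<dots> = (x+y) / ?S * Fs ?a ?f k" by (rule Fs_scale)
    finally show ?thesis .
  qed
  have sz: "(\<Sum>k\<le>N. ?xi k) + (\<Sum>k\<le>N. ?eta k) = x + y"
  proof -
    have "(\<Sum>k\<le>N. ?xi k) + (\<Sum>k\<le>N. ?eta k) = (\<Sum>k\<le>N. (x+y) / ?S * ?f k)"
      unfolding sum.distrib[symmetric] by (rule sum.cong) (auto simp: z)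
    also have "\<dots> = (x + y) / ?S * ?S" unfolding sum_distrib_left[symmetric] Sn_def ..

    also have "\<dots> = x + y" using assms(5) by simp
    finally show ?thesis .
  qed
  have "totalCost \<rho> T \<theta> s0 x y N = (x + y) * s0 - s0 * ((\<Sum>k\<le>N. ?xi k) + (\<Sum>k\<le>N. ?eta k))
     + (\<Sum>k\<le>N. 1/2 * (?xi k + ?eta k)^2 + (?xi k + ?eta k) * Fs ?a (\<lambda>j. ?xi j + ?eta j) k)
     + TR \<rho> T \<theta> x y N"
  proof -
    have sw: "Fs ?a (\<lambda>j. ?eta j + ?xi j) k = Fs ?a (\<lambda>j. ?xi j + ?eta j) k" for k
      by (simp add: add.commute)
    show ?thesis unfolding totalCost_def expCost_Fs TR_def sw
      by (simp add: sum.distrib sum_distrib_left algebra_simps power2_eq_square)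
  qed
  also have "(\<Sum>k\<le>N. 1/2 * (?xi k + ?eta k)^2 + (?xi k + ?eta k) * Fs ?a (\<lambda>j. ?xi j + ?eta j) k)
      = ((x+y) / ?S)^2 * (1/2 * Rn \<rho> T \<theta> N + (\<Sum>k\<le>N. ?f k * Fs ?a ?f k))"
    unfolding Rn_def sum_distrib_left sum.distrib[symmetric] distrib_left
  proof (rule sum.cong)
    fix k assume "k \<in> {..N}" then have k: "k \<le> N" by simp
    show "1/2 * (?xi k + ?eta k)^2 + (?xi k + ?eta k) * Fs ?a (\<lambda>j. ?xi j + ?eta j) k
      = ((x+y) / ?S)^2 * (1/2 * (?f k)^2) + ((x+y) / ?S)^2 * (?f k * Fs ?a ?f k)"
    proof -
      have g: "1/2*(c*p)^2 + (c*p)*(c*q) = c^2*(1/2*p^2) + c^2*(p*q)" for c p q :: real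
        by (simp add: power2_eq_square algebra_simps)
      show ?thesis unfolding z[OF k] Fz[OF k] by (rule g)
    qed
  qed simp
  also have "(\<Sum>k\<le>N. ?f k * Fs ?a ?f k) = (?S - (3/2 + 2*\<theta>) * Rn \<rho> T \<theta> N) / 3"
    by (rule sum_nu_F[OF assms(1-4)])
  finally have X: "totalCost \<rho> T \<theta> s0 x y N = (x + y) * s0 - s0 * ((\<Sum>k\<le>N. ?xi k) + (\<Sum>k\<le>N. ?eta k))
     + ((x+y) / ?S)^2 * (1/2 * Rn \<rho> T \<theta> N + (?S - (3/2 + 2*\<theta>) * Rn \<rho> T \<theta> N) / 3)
     + TR \<rho> T \<theta> x y N" .
  show ?thesis using X[unfolded sz] assms(5)
    by (simp add: field_simps power2_eq_square)
qed

lemma TR_zero: "TR \<rho> T 0 x y N = 0" by (simp add: TR_def)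

lemma TRTC_formula:
  assumes "\<rho> > 0" "T > 0" "N > 0" "\<theta> \<ge> 0" "Sn \<rho> T \<theta> N \<noteq> 0" "Sn \<rho> T 0 N \<noteq> 0"
  shows "TR \<rho> T \<theta> x y N - TC \<rho> T \<theta> s0 x y N =
    (x+y)^2 * (1 / (3 * Sn \<rho> T 0 N) - 1 / (3 * Sn \<rho> T \<theta> N) + 2 * \<theta> * Rn \<rho> T \<theta> N / (3 * (Sn \<rho> T \<theta> N)^2))"
  unfolding TC_def totalCost_formula[OF assms(1-5)] totalCost_formula[OF assms(1-3) order_refl assms(6)]
  by (simp add: TR_zero algebra_simps)


definition Pq :: "real \<Rightarrow> real \<Rightarrow> real \<Rightarrow> real" where
  "Pq a g l = 2*a*(1 - a*l) + a*l*(l - a) + g*(l - a)*(1 - a*l)"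

lemma Fs_closed: "l \<noteq> a \<Longrightarrow> Fs a (\<lambda>j. l^j) i = a * (l^i - a^i) / (l - a)"
  using geoF[of l a i] by (simp add: field_simps)

lemma Bs_closed: "a*l \<noteq> 1 \<Longrightarrow> i \<le> N \<Longrightarrow> Bs a N (\<lambda>j. l^j) i = a*l*(l^i - a^(N-i)*l^N) / (1 - a*l)"
  using geoB[of i N a l] by (simp add: field_simps)

lemma per_lambda_alg0:
  fixes a g l L A AN LN u v :: real
  assumes "u \<noteq> 0" "v \<noteq> 0"
  shows "2 * (a * (L - A) / u) + a*l*(L - AN*LN) / v + g * L =
    (2*a*v + a*l*u + g*u*v) * L / (u * v) - 2*a*A / u - a*AN*(l*LN) / v"
  using assms by (simp add: field_simps)

lemma per_lambda_alg:
  fixes a g l L A AN LN :: real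
  assumes "l \<noteq> a" "a*l \<noteq> 1"
  shows "2 * (a * (L - A) / (l - a)) + a*l*(L - AN*LN) / (1 - a*l) + g * L =
    Pq a g l * L / ((l - a) * (1 - a*l)) - 2*a*A / (l - a) - a*AN*(l*LN) / (1 - a*l)"
proof -
  have d1: "l - a \<noteq> 0" "1 - a*l \<noteq> 0" using assms by auto
  have p: "Pq a g l = 2*a*(1 - a*l) + a*l*(l - a) + g*(l - a)*(1 - a*l)" by (simp add: Pq_def)
  show ?thesis unfolding p by (rule per_lambda_alg0[OF d1])
qed

lemma per_lambda:
  assumes "l \<noteq> a" "a*l \<noteq> 1" "i \<le> N"
  shows "2 * Fs a (\<lambda>j. l^j) i + Bs a N (\<lambda>j. l^j) i + g * l^i =
    Pq a g l * l^i / ((l - a) * (1 - a*l)) - 2*a*a^i / (l - a) - a*a^(N-i)*l^(N+1) / (1 - a*l)"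
proof -
  have e: "l^(N+1) = l * l^N" by simp
  show ?thesis unfolding Fs_closed[OF assms(1)] Bs_closed[OF assms(2,3)] e
    by (rule per_lambda_alg[OF assms(1,2)])
qed

lemma closed_nu:
  fixes a g l1 l2 c0 c1 c2 :: real
  assumes a1: "a \<noteq> 1" and n1: "l1 \<noteq> a" "a*l1 \<noteq> 1" and n2: "l2 \<noteq> a" "a*l2 \<noteq> 1"
    and P1: "Pq a g l1 = 0" and P2: "Pq a g l2 = 0"
    and C0: "c0 * Pq a g 1 / ((1 - a) * (1 - a)) = 1"
    and E1: "c0 / (1 - a) + c1 / (l1 - a) + c2 / (l2 - a) = 0"
    and E2: "c0 / (1 - a) + c1 * l1^(N+1) / (1 - a*l1) + c2 * l2^(N+1) / (1 - a*l2) = 0"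
    and i: "i \<le> N"
  shows "2 * Fs a (\<lambda>j. c0 + c1 * l1^j + c2 * l2^j) i + Bs a N (\<lambda>j. c0 + c1 * l1^j + c2 * l2^j) i
     + g * (c0 + c1 * l1^i + c2 * l2^i) = 1"
proof -
  have p0: "2 * Fs a (\<lambda>j. 1) i + Bs a N (\<lambda>j. 1) i + g * 1 =
    Pq a g 1 * 1 / ((1 - a) * (1 - a)) - 2*a*a^i / (1 - a) - a*a^(N-i)*1 / (1 - a)"
    using per_lambda[of 1 a i N g] a1 i by simp
  note p1 = per_lambda[OF n1 i, of g, unfolded P1]
  note p2 = per_lambda[OF n2 i, of g, unfolded P2]
  have "2 * Fs a (\<lambda>j. c0 + c1 * l1^j + c2 * l2^j) i + Bs a N (\<lambda>j. c0 + c1 * l1^j + c2 * l2^j) i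
     + g * (c0 + c1 * l1^i + c2 * l2^i)
    = c0 * (2 * Fs a (\<lambda>j. 1) i + Bs a N (\<lambda>j. 1) i + g * 1)
      + c1 * (2 * Fs a (\<lambda>j. l1^j) i + Bs a N (\<lambda>j. l1^j) i + g * l1^i)
      + c2 * (2 * Fs a (\<lambda>j. l2^j) i + Bs a N (\<lambda>j. l2^j) i + g * l2^i)"
    unfolding Fs_lin Bs_lin by (simp add: algebra_simps)
  also have "\<dots> = c0 * Pq a g 1 / ((1 - a) * (1 - a))
      - 2*a*a^i * (c0 / (1 - a) + c1 / (l1 - a) + c2 / (l2 - a))
      - a*a^(N-i) * (c0 / (1 - a) + c1 * l1^(N+1) / (1 - a*l1) + c2 * l2^(N+1) / (1 - a*l2))"
    unfolding p0 p1 p2 by (simp add: algebra_simps)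
  also have "\<dots> = 1" unfolding E1 E2 C0 by simp
  finally show ?thesis .
qed

lemma closed_om_alg:
  fixes a b u w Aa M :: real
  assumes "u \<noteq> 0" "w \<noteq> 0" "b \<noteq> 0" "a \<noteq> 0" "w = b*u + a"
  shows "u / w * (a * (1 - Aa) / u) + a / (b * w) * (a * (M - Aa) / (- a / b)) + b * (u / w + a / (b * w) * M) = 1"
proof -
  have "u / w * (a * (1 - Aa) / u) + a / (b * w) * (a * (M - Aa) / (- a / b)) + b * (u / w + a / (b * w) * M) = (b*u + a)/w"
    using assms(1-4) by (simp add: field_simps)
  then show ?thesis using assms by simp
qed

lemma closed_om:
  fixes a b :: real
  assumes a0: "0 < a" "a < 1" and b: "b > 0"
  defines "m \<equiv> a * (b - 1) / b"
  defines "d0 \<equiv> (1 - a) / (b * (1 - a) + a)"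
  defines "d1 \<equiv> a / (b * (b * (1 - a) + a))"
  assumes i: "i \<le> N"
  shows "Bs a N (\<lambda>j. d0 + d1 * m^(N-j)) i + b * (d0 + d1 * m^(N-i)) = 1"
proof -
  have B1: "Bs a N (\<lambda>j. 1) i = a * (1 - a^(N-i)) / (1 - a)"
    using geoB[OF i, of a 1] a0 by (simp add: field_simps)
  have ma: "m - a \<noteq> 0" using a0 b by (simp add: m_def field_simps)
  have B2: "Bs a N (\<lambda>j. m^(N-j)) i = a * (m^(N-i) - a^(N-i)) / (m - a)"
    using geoBrev[OF i, of m a] ma by (simp add: field_simps)
  have lin: "Bs a N (\<lambda>j. d0 + d1 * m^(N-j)) i = d0 * Bs a N (\<lambda>j. 1) i + d1 * Bs a N (\<lambda>j. m^(N-j)) i"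
    by (simp add: Bs_def sum.distrib sum_distrib_left algebra_simps)
  have pos: "b * (1 - a) + a > 0" using a0 b by (simp add: add_pos_nonneg)
  have mm: "m - a = - a / b" using b by (simp add: m_def field_simps)
  show ?thesis unfolding lin B1 B2 mm unfolding d0_def d1_def
    by (rule closed_om_alg) (use a0 b pos in auto)
qed

lemma gsum: fixes x :: real assumes "x \<noteq> 1" shows "(\<Sum>i\<le>N. x^i) = (x^(N+1) - 1) / (x - 1)"
proof -
  have "(\<Sum>i\<le>N. x^i) = (\<Sum>i<Suc N. x^i)" by (simp only: lessThan_Suc_atMost)
  also have "\<dots> = (x^Suc N - 1) / (x - 1)" using geometric_sum[OF assms] by blast
  finally show ?thesis by simp
qed

lemma sum_rev_pow: "(\<Sum>i\<le>N. (m::real)^(N-i)) = (\<Sum>i\<le>N. m^i)"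
proof -
  have "(\<Sum>i\<le>N. m^(N-i)) = (\<Sum>i\<in>{0..N}. m^(N-i))" by (simp add: atLeast0AtMost)
  also have "\<dots> = (\<Sum>i\<in>{0..N}. m^(N + 0 - (N + 0 - i)))" by (subst sum.atLeastAtMost_rev) simp
  also have "\<dots> = (\<Sum>i\<le>N. m^i)" by (simp add: atLeast0AtMost)
  finally show ?thesis .
qed

lemma sum_f_closed:
  fixes c0 c1 c2 l1 l2 :: real
  shows  "(\<Sum>i\<le>N. c0 + c1 * l1^i + c2 * l2^i) = (N+1) * c0 + c1 * (\<Sum>i\<le>N. l1^i) + c2 * (\<Sum>i\<le>N. l2^i)"
  by (simp add: sum.distrib sum_distrib_left)

lemma sum_f2_closed:
  fixes c0 c1 c2 l1 l2 :: real
  shows  "(\<Sum>i\<le>N. (c0 + c1 * l1^i + c2 * l2^i)^2) = (N+1) * c0^2 + c1^2 * (\<Sum>i\<le>N. (l1^2)^i) + c2^2 * (\<Sum>i\<le>N. (l2^2)^i)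
     + 2*c0*c1 * (\<Sum>i\<le>N. l1^i) + 2*c0*c2 * (\<Sum>i\<le>N. l2^i) + 2*c1*c2 * (\<Sum>i\<le>N. (l1*l2)^i)"
proof -
  have "(c0 + c1 * l1^i + c2 * l2^i)^2 = c0^2 + c1^2 * (l1^2)^i + c2^2 * (l2^2)^i
     + 2*c0*c1 * l1^i + 2*c0*c2 * l2^i + 2*c1*c2 * (l1*l2)^i" for i
    by (simp add: power2_eq_square power_mult_distrib power_mult[symmetric] algebra_simps)
  then show ?thesis by (simp add: sum.distrib sum_distrib_left)
qed

lemma sum_g_closed:
  fixes d0 d1 m :: real
  shows  "(\<Sum>i\<le>N. d0 + d1 * m^(N-i)) = (N+1) * d0 + d1 * (\<Sum>i\<le>N. m^i)"
proof -
  have "(\<Sum>i\<le>N. d0 + d1 * m^(N-i)) = (N+1) * d0 + d1 * (\<Sum>i\<le>N. m^(N-i))"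
    by (simp add: sum.distrib sum_distrib_left)
  then show ?thesis unfolding sum_rev_pow by simp
qed

lemma sum_g2_closed:
  fixes d0 d1 m :: real
  shows  "(\<Sum>i\<le>N. (d0 + d1 * m^(N-i))^2) = (N+1) * d0^2 + 2*d0*d1 * (\<Sum>i\<le>N. m^i) + d1^2 * (\<Sum>i\<le>N. (m^2)^i)"
proof -
  have "(\<Sum>i\<le>N. (d0 + d1 * m^(N-i))^2) = (\<Sum>i\<le>N. d0^2 + 2*d0*d1 * m^(N-i) + d1^2 * (m^2)^(N-i))"
    by (rule sum.cong) (auto simp: power2_eq_square power_mult_distrib algebra_simps)
  also have "\<dots> = (N+1) * d0^2 + 2*d0*d1 * (\<Sum>i\<le>N. m^(N-i)) + d1^2 * (\<Sum>i\<le>N. (m^2)^(N-i))"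
    by (simp add: sum.distrib sum_distrib_left)
  finally show ?thesis unfolding sum_rev_pow by simp
qed


lemma real_h_at_top:
  assumes "filterlim h at_top sequentially"
  shows "filterlim (\<lambda>k. real (h k)) at_top sequentially"
  using filterlim_compose[OF filterlim_real_sequentially assms] .

lemma to1_from_scaled:
  assumes h: "filterlim h at_top sequentially" and c: "((\<lambda>k. real (h k) * (x k - 1)) \<longlongrightarrow> c) sequentially"
  shows "(x \<longlongrightarrow> 1) sequentially"
proof -
  have n: "filterlim (\<lambda>k. real (h k)) at_top sequentially" by (rule real_h_at_top[OF h])
  have i: "((\<lambda>k. inverse (real (h k))) \<longlongrightarrow> 0) sequentially"
    by (rule tendsto_inverse_0_at_top[OF n])
  have "((\<lambda>k. inverse (real (h k)) * (real (h k) * (x k - 1)) + 1) \<longlongrightarrow> 0 * c + 1) sequentially"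
    by (intro tendsto_intros i c)
  moreover have "eventually (\<lambda>k. inverse (real (h k)) * (real (h k) * (x k - 1)) + 1 = x k) sequentially"
    using filterlim_at_top_dense[THEN iffD1, OF n, rule_format, of 0]
    by eventually_elim (auto simp: field_simps)
  ultimately show ?thesis by (simp add: tendsto_cong)
qed

lemma pow_limit:
  assumes h: "filterlim h at_top sequentially"
    and c: "((\<lambda>k. real (h k) * (x k - 1)) \<longlongrightarrow> c) sequentially"
    and pos: "eventually (\<lambda>k. x k > 0) sequentially"
  shows "((\<lambda>k. x k ^ h k) \<longlongrightarrow> exp c) sequentially"
proof -
  have x1: "(x \<longlongrightarrow> 1) sequentially" by (rule to1_from_scaled[OF h c])
  have lo: "((\<lambda>k. real (h k) * (x k - 1) / x k) \<longlongrightarrow> c / 1) sequentially"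
    by (intro tendsto_intros c x1) simp
  have ln_b: "real (h k) * (x k - 1) / x k \<le> real (h k) * ln (x k) \<and> real (h k) * ln (x k) \<le> real (h k) * (x k - 1)"
    if "x k > 0" for k
  proof -
    have u: "ln (x k) \<le> x k - 1" using ln_le_minus_one that by blast
    have "ln (1 / x k) \<le> 1 / x k - 1" using ln_le_minus_one that by simp
    then have l: "(x k - 1) / x k \<le> ln (x k)" using that by (simp add: ln_div field_simps)
    show ?thesis using u l by (simp add: mult_left_mono times_divide_eq_right[symmetric] del: times_divide_eq_right)
  qed
  have "((\<lambda>k. real (h k) * ln (x k)) \<longlongrightarrow> c) sequentially"
    by (rule tendsto_sandwich[OF _ _ lo[simplified] c]) (use pos ln_b in \<open>auto elim: eventually_mono\<close>)
  then have "((\<lambda>k. exp (real (h k) * ln (x k))) \<longlongrightarrow> exp c) sequentially"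
    by (intro tendsto_intros)
  moreover have "eventually (\<lambda>k. exp (real (h k) * ln (x k)) = x k ^ h k) sequentially"
    using pos by eventually_elim (simp add: ln_realpow[symmetric])
  ultimately show ?thesis by (simp add: tendsto_cong)
qed

lemma scaled_exp_limit:
  assumes h: "filterlim h at_top sequentially" and r: "r > 0"
  shows "((\<lambda>k. real (h k) * (1 - exp (- r / real (h k)))) \<longlongrightarrow> r) sequentially"
proof -
  have n: "filterlim (\<lambda>k. real (h k)) at_top sequentially" by (rule real_h_at_top[OF h])
  have z0: "((\<lambda>k. - r / real (h k)) \<longlongrightarrow> 0) sequentially"
    using tendsto_mult[OF tendsto_const tendsto_inverse_0_at_top[OF n], of "-r"] by (simp add: divide_inverse)
  have ev: "eventually (\<lambda>k. real (h k) > 0) sequentially"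
    using filterlim_at_top_dense[THEN iffD1, OF n, rule_format, of 0] by simp
  have z: "filterlim (\<lambda>k. - r / real (h k)) (at 0) sequentially"
    using z0 ev r by (auto simp: filterlim_at eventually_mono)
  have "((\<lambda>k. (exp (- r / real (h k)) - 1) / (- r / real (h k))) \<longlongrightarrow> 1) sequentially"
    using filterlim_compose[OF lim_exp_minus_1 z] by simp
  then have "((\<lambda>k. r * ((exp (- r / real (h k)) - 1) / (- r / real (h k)))) \<longlongrightarrow> r * 1) sequentially"
    by (intro tendsto_intros)
  moreover have "eventually (\<lambda>k. r * ((exp (- r / real (h k)) - 1) / (- r / real (h k))) = real (h k) * (1 - exp (- r / real (h k)))) sequentially"
    using ev by eventually_elim (use r in \<open>auto simp: field_simps\<close>)
  ultimately show ?thesis by (simp add: tendsto_cong)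
qed

lemma quad_root:
  fixes A B C :: real
  assumes "A \<noteq> 0" "B^2 - 4*A*C \<ge> 0"
  shows "A * ((- B - sqrt (B^2 - 4*A*C)) / (2*A))^2 + B * ((- B - sqrt (B^2 - 4*A*C)) / (2*A)) + C = 0"
proof -
  have s: "(sqrt (B^2 - 4*A*C))^2 = B^2 - 4*A*C" using assms(2) by simp
  show ?thesis using assms(1) s by (simp add: field_simps power2_eq_square)
qed


definition "Aq g a = (1 - g) * (a::real)"
definition "Bq g a = g * (1 + a^2) - 3 * (a::real)^2"
definition "Cq g a = (2 - g) * (a::real)"
definition "Dq g a = (Bq g a)^2 - 4 * Aq g a * Cq g a"
definition "lam1 g a = (- Bq g a - sqrt (Dq g a)) / (2 * Aq g a)"
definition "pp g = ((g::real) - 2) / (g - 1)"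
definition "lam2 g a = pp g / lam1 g a"
definition "Kq g a = 1 / (3 * a + g * (1 - (a::real)))"
definition "uu1 g a = 1 / (lam1 g a - a)"
definition "uu2 g a = 1 / (lam2 g a - a)"
definition "ww1 g a (N::nat) = lam1 g a ^ (N+1) / (1 - a * lam1 g a)"
definition "ww2 g a (N::nat) = lam2 g a ^ (N+1) / (1 - a * lam2 g a)"
definition "Dt g a N = uu1 g a * ww2 g a N - uu2 g a * ww1 g a N"
definition "cc0 g a = Kq g a * (1 - a)"
definition "cc1 g a N = - Kq g a * (ww2 g a N - uu2 g a) / Dt g a N"
definition "cc2 g a N = - Kq g a * (uu1 g a - ww1 g a N) / Dt g a N"
definition "nuf g a N i = cc0 g a + cc1 g a N * lam1 g a ^ i + cc2 g a N * lam2 g a ^ i"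

lemma Pq_expand: "Pq a g l = Aq g a * l^2 + Bq g a * l + Cq g a"
  by (simp add: Pq_def Aq_def Bq_def Cq_def power2_eq_square algebra_simps)

lemma Pq_lam1:
  assumes "g > 1" "a > 0" "Dq g a \<ge> 0"
  shows "Pq a g (lam1 g a) = 0"
proof -
  have "Aq g a \<noteq> 0" using assms by (simp add: Aq_def)
  then show ?thesis unfolding Pq_expand lam1_def using quad_root[of "Aq g a" "Bq g a" "Cq g a"] assms(3)
    by (simp add: Dq_def)
qed

lemma Pq_lam2:
  assumes "g > 1" "a > 0" "Dq g a \<ge> 0" "lam1 g a \<noteq> 0"
  shows "Pq a g (lam2 g a) = 0"
proof -
  let ?A = "Aq g a" and ?B = "Bq g a" and ?C = "Cq g a" and ?l = "lam1 g a"
  have A: "?A \<noteq> 0" using assms by (simp add: Aq_def)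
  have p: "pp g = ?C / ?A" using assms by (simp add: pp_def Aq_def Cq_def field_simps)
  have P1: "?A * ?l^2 + ?B * ?l + ?C = 0" using Pq_lam1[OF assms(1-3)] by (simp add: Pq_expand)
  have "Pq a g (lam2 g a) = ?C / (?A * ?l^2) * (?A * ?l^2 + ?B * ?l + ?C)"
    unfolding Pq_expand lam2_def p using A assms(4) by (simp add: field_simps power2_eq_square)
  then show ?thesis using P1 by simp
qed

lemma nuf_solves:
  assumes g: "g \<ge> 3/2" and a: "0 < a" "a < 1" and D: "Dq g a \<ge> 0"
    and n1: "lam1 g a \<noteq> a" "a * lam1 g a \<noteq> 1" and n2: "lam2 g a \<noteq> a" "a * lam2 g a \<noteq> 1"
    and l0: "lam1 g a \<noteq> 0" and Dt: "Dt g a N \<noteq> 0" and i: "i \<le> N"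
  shows "2 * Fs a (nuf g a N) i + Bs a N (nuf g a N) i + g * nuf g a N i = 1"
proof -
  have g1: "g > 1" using g by simp
  have k: "3 * a + g * (1 - a) > 0" using a g by (simp add: add_pos_nonneg)
  have C0: "cc0 g a * Pq a g 1 / ((1 - a) * (1 - a)) = 1"
  proof -
    have P: "Pq a g 1 = (1 - a) * (3 * a + g * (1 - a))" by (simp add: Pq_def algebra_simps)
    have a1: "1 - a \<noteq> 0" using a by simp
    have "cc0 g a * Pq a g 1 / ((1 - a) * (1 - a)) = Kq g a * (3 * a + g * (1 - a))"
      unfolding P cc0_def using a1 by simp
    also have "\<dots> = 1" using k by (simp add: Kq_def)
    finally show ?thesis .
  qed
  have d: "lam1 g a - a \<noteq> 0" "lam2 g a - a \<noteq> 0" "1 - a * lam1 g a \<noteq> 0" "1 - a * lam2 g a \<noteq> 0" "1 - a \<noteq> 0"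
    using n1 n2 a by auto
  have cr: "K + (- K * (w2 - u2) / D) * u1 + (- K * (u1 - w1) / D) * u2 = 0"
      "K + (- K * (w2 - u2) / D) * w1 + (- K * (u1 - w1) / D) * w2 = 0"
    if "D = u1 * w2 - u2 * w1" "D \<noteq> 0" for K u1 u2 w1 w2 D :: real
    using that(2) by (simp_all add: field_simps) (simp_all add: that(1) algebra_simps)
  have k0: "cc0 g a / (1 - a) = Kq g a" using d(5) by (simp add: cc0_def)
  have E1: "cc0 g a / (1 - a) + cc1 g a N / (lam1 g a - a) + cc2 g a N / (lam2 g a - a) = 0"
    unfolding k0 using cr(1)[OF Dt_def Dt] by (simp add: cc1_def cc2_def uu1_def uu2_def)
  have E2: "cc0 g a / (1 - a) + cc1 g a N * lam1 g a ^ (N+1) / (1 - a * lam1 g a) + cc2 g a N * lam2 g a ^ (N+1) / (1 - a * lam2 g a) = 0"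
    unfolding k0 using cr(2)[OF Dt_def Dt] by (simp add: cc1_def cc2_def ww1_def ww2_def)
  show ?thesis unfolding nuf_def
    by (rule closed_nu[OF _ n1 n2 Pq_lam1[OF g1 a(1) D] Pq_lam2[OF g1 a(1) D l0] C0 E1 E2 i]) (use a in simp)
qed


lemma pp_bounds: assumes "(g::real) \<ge> 3/2" shows "pp g < 1" "pp g \<ge> -1"
  using assms by (auto simp: pp_def field_simps)

lemma Dq_1: "Dq g 1 = 1"
  by (simp add: Dq_def Aq_def Bq_def Cq_def power2_eq_square algebra_simps)

lemma lam1_1: assumes "(g::real) > 1" shows "lam1 g 1 = 1"
proof -
  have "Aq g 1 \<noteq> 0" using assms by (simp add: Aq_def)
  then show ?thesis using assms unfolding lam1_def Dq_1 by (simp add: Aq_def Bq_def field_simps)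
qed

lemma lam1_ident:
  assumes g: "g > 1" and a: "a > 0" and D: "Dq g a \<ge> 0"
  shows "Aq g a * (lam1 g a - 1) * (lam1 g a - pp g) = - (1 - a) * (g * (1 - a) + 3 * a) * lam1 g a"
proof -
  let ?l = "lam1 g a"
  have P: "Aq g a * ?l^2 + Bq g a * ?l + Cq g a = 0" using Pq_lam1[OF g a D] by (simp add: Pq_expand)
  have Ap: "Aq g a * pp g = Cq g a" using g by (simp add: Aq_def Cq_def pp_def field_simps)
  have "Aq g a * (?l - 1) * (?l - pp g) = Aq g a * ?l^2 - Aq g a * ?l - Aq g a * pp g * ?l + Aq g a * pp g"
    by (simp add: power2_eq_square algebra_simps)
  also have "\<dots> = - Bq g a * ?l - Aq g a * ?l - Cq g a * ?l" using P Ap by (simp add: algebra_simps)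
  also have "\<dots> = - (1 - a) * (g * (1 - a) + 3 * a) * ?l"
    by (simp add: Aq_def Bq_def Cq_def power2_eq_square algebra_simps)
  finally show ?thesis .
qed

locale asy =
  fixes r g :: real and h :: "nat \<Rightarrow> nat" and pii :: real
  assumes r: "r > 0" and g: "g \<ge> 3/2" and h: "filterlim h at_top sequentially"
    and pi: "((\<lambda>k. pp g ^ h k) \<longlongrightarrow> pii) sequentially"
    and pib: "\<bar>pii\<bar> \<le> 1"
begin

definition "nn k = real (h k)"
definition "aa k = exp (- r / nn k)"
definition "EE = exp (3 * r)"
definition "L1 k = lam1 g (aa k)"
definition "L2 k = lam2 g (aa k)"

lemma g1: "g > 1" using g by simp

lemma ev_h: "eventually (\<lambda>k. h k > 0) sequentially"
  using h unfolding filterlim_at_top by (auto dest!: spec[of _ 1] elim: eventually_mono)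

lemma ev_n: "eventually (\<lambda>k. nn k > 0) sequentially"
  using ev_h by (auto simp: nn_def elim: eventually_mono)

lemma ev_a: "eventually (\<lambda>k. 0 < aa k \<and> aa k < 1) sequentially"
  using ev_n r by (auto simp: aa_def elim!: eventually_mono)

lemma lim_na: "((\<lambda>k. nn k * (1 - aa k)) \<longlongrightarrow> r) sequentially"
  unfolding nn_def aa_def by (rule scaled_exp_limit[OF h r])

lemma lim_a: "(aa \<longlongrightarrow> 1) sequentially"
proof -
  have "((\<lambda>k. real (h k) * ((2 - aa k) - 1)) \<longlongrightarrow> r) sequentially"
    using lim_na by (simp add: nn_def)
  then have "((\<lambda>k. 2 - aa k) \<longlongrightarrow> 1) sequentially" by (rule to1_from_scaled[OF h])
  then have "((\<lambda>k. 2 - (2 - aa k)) \<longlongrightarrow> 2 - 1) sequentially" by (intro tendsto_intros)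
  then show ?thesis by simp
qed

lemma lim_D0: "((\<lambda>k. Dq g (aa k)) \<longlongrightarrow> Dq g 1) sequentially"
    unfolding Dq_def Aq_def Bq_def Cq_def by (intro tendsto_intros lim_a)

lemma lim_D: "((\<lambda>k. Dq g (aa k)) \<longlongrightarrow> 1) sequentially"
  using lim_D0 by (simp add: Dq_1)

lemma ev_D: "eventually (\<lambda>k. Dq g (aa k) > 0) sequentially"
  using lim_D by (rule order_tendstoD) simp

lemma lim_Aq: "((\<lambda>k. Aq g (aa k)) \<longlongrightarrow> Aq g 1) sequentially"
  unfolding Aq_def by (intro tendsto_intros lim_a)
lemma lim_Bq: "((\<lambda>k. Bq g (aa k)) \<longlongrightarrow> Bq g 1) sequentially"
  unfolding Bq_def by (intro tendsto_intros lim_a)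

lemma lim_L1: "(L1 \<longlongrightarrow> 1) sequentially"
proof -
  have A: "Aq g 1 \<noteq> 0" using g1 by (simp add: Aq_def)
  have "(L1 \<longlongrightarrow> (- Bq g 1 - sqrt (Dq g 1)) / (2 * Aq g 1)) sequentially"
    unfolding L1_def lam1_def using A
    by (intro tendsto_intros lim_Aq lim_Bq lim_D0) simp
  then show ?thesis using lam1_1[OF g1] by (simp add: lam1_def)
qed

end


lemma Dinf_alg:
  fixes p P E r :: real
  assumes "p < 1" "E > 0" "r > 0"
  shows "1 / (4 * r) * (P / E / (1 - p)) - 1 / (p - 1) * (E / (- 2 * r)) = (P - 2 * E^2) / (4 * r * E * (1 - p))"
proof -
  define q where "q = 1 - p"
  have q: "q > 0" using assms by (simp add: q_def)
  have pq: "p - 1 = - q" by (simp add: q_def)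
  show ?thesis unfolding pq unfolding q_def[symmetric] using q assms by (simp add: field_simps power2_eq_square)
qed

context asy begin

lemma L2_eq: "L2 = (\<lambda>k. pp g / L1 k)" by (rule ext) (simp add: L2_def L1_def lam2_def)

lemma ev_L1pos: "eventually (\<lambda>k. L1 k > 0) sequentially"
  using lim_L1 by (rule order_tendstoD) simp

lemma ev_L1p: "eventually (\<lambda>k. L1 k > pp g) sequentially"
  using lim_L1 by (rule order_tendstoD) (use pp_bounds[OF g] in simp)

lemma lim_nL1: "((\<lambda>k. nn k * (L1 k - 1)) \<longlongrightarrow> 3 * r) sequentially"
proof -
  have A: "Aq g 1 \<noteq> 0" "1 - pp g \<noteq> 0" using g1 pp_bounds[OF g] by (auto simp: Aq_def)
  have "((\<lambda>k. (nn k * (1 - aa k)) * (- (g * (1 - aa k) + 3 * aa k) * L1 k / (Aq g (aa k) * (L1 k - pp g))))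
     \<longlongrightarrow> r * (- (g * (1 - 1) + 3 * 1) * 1 / (Aq g 1 * (1 - pp g)))) sequentially"
    by (intro tendsto_intros lim_na lim_a lim_L1 lim_Aq) (use A in simp)
  moreover have "r * (- (g * (1 - 1) + 3 * 1) * 1 / (Aq g 1 * (1 - pp g))) = 3 * r"
    using g1 by (simp add: Aq_def pp_def field_simps)
  moreover have "eventually (\<lambda>k. (nn k * (1 - aa k)) * (- (g * (1 - aa k) + 3 * aa k) * L1 k / (Aq g (aa k) * (L1 k - pp g)))
      = nn k * (L1 k - 1)) sequentially"
    using ev_a ev_D ev_L1p
  proof eventually_elim
    case (elim k)
    have I: "Aq g (aa k) * (L1 k - 1) * (L1 k - pp g) = - (1 - aa k) * (g * (1 - aa k) + 3 * aa k) * L1 k"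
      unfolding L1_def by (rule lam1_ident[OF g1]) (use elim in auto)
    have nz: "Aq g (aa k) * (L1 k - pp g) \<noteq> 0" using elim g1 by (auto simp: Aq_def)
    have I2: "(L1 k - 1) * (Aq g (aa k) * (L1 k - pp g)) = (1 - aa k) * (- (g * (1 - aa k) + 3 * aa k) * L1 k)"
      using I by (simp add: algebra_simps)
    have Y: "L1 k - 1 = (1 - aa k) * (- (g * (1 - aa k) + 3 * aa k) * L1 k) / (Aq g (aa k) * (L1 k - pp g))"
      using I2 nz by (simp add: eq_divide_eq)
    show ?case unfolding Y by (simp add: mult_ac)
  qed
  ultimately show ?thesis by (simp add: tendsto_cong)
qed

lemma lim_E: "((\<lambda>k. L1 k ^ h k) \<longlongrightarrow> EE) sequentially"
  unfolding EE_def by (rule pow_limit[OF h lim_nL1[unfolded nn_def] ev_L1pos])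

lemma lim_E1: "((\<lambda>k. L1 k ^ (h k + 1)) \<longlongrightarrow> EE) sequentially"
  using tendsto_mult[OF lim_L1 lim_E] by simp

lemma EE_gt1: "EE > 1" using r by (simp add: EE_def)

lemma lim_L2: "(L2 \<longlongrightarrow> pp g) sequentially"
  using tendsto_divide[OF tendsto_const lim_L1, of "pp g"] unfolding L2_eq by simp

lemma lim_P2: "((\<lambda>k. L2 k ^ (h k + 1)) \<longlongrightarrow> pp g * pii / EE) sequentially"
proof -
  have "((\<lambda>k. pp g * pp g ^ h k / L1 k ^ (h k + 1)) \<longlongrightarrow> pp g * pii / EE) sequentially"
    by (intro tendsto_intros pi lim_E1) (use EE_gt1 in simp)
  moreover have "eventually (\<lambda>k. pp g * pp g ^ h k / L1 k ^ (h k + 1) = L2 k ^ (h k + 1)) sequentially"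
    using ev_L1pos by eventually_elim (simp add: L2_eq power_divide)
  ultimately show ?thesis by (simp add: tendsto_cong)
qed

lemma lim_nLa: "((\<lambda>k. nn k * (L1 k - aa k)) \<longlongrightarrow> 4 * r) sequentially"
proof -
  have "((\<lambda>k. nn k * (L1 k - 1) + nn k * (1 - aa k)) \<longlongrightarrow> 3 * r + r) sequentially"
    by (intro tendsto_intros lim_nL1 lim_na)
  then show ?thesis by (simp add: algebra_simps)
qed

lemma lim_naL: "((\<lambda>k. nn k * (1 - aa k * L1 k)) \<longlongrightarrow> - 2 * r) sequentially"
proof -
  have "((\<lambda>k. nn k * (1 - aa k) - aa k * (nn k * (L1 k - 1))) \<longlongrightarrow> r - 1 * (3 * r)) sequentially"
    by (intro tendsto_intros lim_nL1 lim_na lim_a)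
  then show ?thesis by (simp add: algebra_simps)
qed

definition "u1n k = 1 / (nn k * (L1 k - aa k))"
definition "w1n k = L1 k ^ (h k + 1) / (nn k * (1 - aa k * L1 k))"
definition "U2 k = uu2 g (aa k)"
definition "W2 k = ww2 g (aa k) (h k)"
definition "Dn k = u1n k * W2 k - U2 k * w1n k"
definition "KK k = Kq g (aa k)"
definition "C1n k = - KK k * (W2 k - U2 k) / Dn k"
definition "C2 k = - KK k * (u1n k - w1n k) / Dn k"

definition "W2inf = pp g * pii / EE / (1 - pp g)"
definition "Dinf = 1 / (4 * r) * W2inf - 1 / (pp g - 1) * (EE / (- 2 * r))"
definition "C1inf = - (1/3) * (W2inf - 1 / (pp g - 1)) / Dinf"
definition "C2inf = - (1/3) * (1 / (4 * r) - EE / (- 2 * r)) / Dinf"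

lemma lim_u1n: "(u1n \<longlongrightarrow> 1 / (4 * r)) sequentially"
  unfolding u1n_def by (intro tendsto_intros lim_nLa) (use r in simp)
lemma lim_w1n: "(w1n \<longlongrightarrow> EE / (- 2 * r)) sequentially"
  unfolding w1n_def by (intro tendsto_intros lim_naL lim_E1) (use r in simp)
lemma lim_U2: "(U2 \<longlongrightarrow> 1 / (pp g - 1)) sequentially"
proof -
  have "((\<lambda>k. 1 / (L2 k - aa k)) \<longlongrightarrow> 1 / (pp g - 1)) sequentially"
    by (intro tendsto_intros lim_L2 lim_a) (use pp_bounds[OF g] in simp)
  moreover have "U2 = (\<lambda>k. 1 / (L2 k - aa k))" by (rule ext) (simp add: U2_def uu2_def L2_def)
  ultimately show ?thesis by simp
qed
lemma lim_W2: "(W2 \<longlongrightarrow> W2inf) sequentially"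
proof -
  have "((\<lambda>k. L2 k ^ (h k + 1) / (1 - aa k * L2 k)) \<longlongrightarrow> pp g * pii / EE / (1 - 1 * pp g)) sequentially"
    by (intro tendsto_intros lim_P2 lim_L2 lim_a) (use pp_bounds[OF g] in simp)
  moreover have "W2 = (\<lambda>k. L2 k ^ (h k + 1) / (1 - aa k * L2 k))" by (rule ext) (simp add: W2_def ww2_def L2_def)
  ultimately show ?thesis by (simp add: W2inf_def)
qed
lemma lim_KK: "(KK \<longlongrightarrow> 1/3) sequentially"
proof -
  have "((\<lambda>k. 1 / (3 * aa k + g * (1 - aa k))) \<longlongrightarrow> 1 / (3 * 1 + g * (1 - 1))) sequentially"
    by (intro tendsto_intros lim_a) simp
  moreover have "KK = (\<lambda>k. 1 / (3 * aa k + g * (1 - aa k)))" by (rule ext) (simp add: KK_def Kq_def)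
  ultimately show ?thesis by simp
qed

lemma Dinf_ne: "Dinf \<noteq> 0"
proof -
  have p: "pp g < 1" "pp g \<ge> -1" using pp_bounds[OF g] by auto
  have E: "EE > 1" by (rule EE_gt1)
  have "Dinf = (pp g * pii - 2 * EE^2) / (4 * r * EE * (1 - pp g))"
    unfolding Dinf_def W2inf_def using p E r by (intro Dinf_alg) auto
  moreover have "\<bar>pp g * pii\<bar> \<le> 1" using p pib by (simp add: abs_mult mult_le_one)
  moreover have "2 * EE^2 > 1" using one_less_power[OF E, of 2] by simp
  ultimately show ?thesis using p E r by (auto simp: abs_le_iff)
qed

lemma lim_Dn: "(Dn \<longlongrightarrow> Dinf) sequentially"
  unfolding Dn_def Dinf_def by (intro tendsto_intros lim_u1n lim_W2 lim_U2 lim_w1n)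
lemma lim_C1n: "(C1n \<longlongrightarrow> C1inf) sequentially"
  unfolding C1n_def C1inf_def by (intro tendsto_intros lim_KK lim_W2 lim_U2 lim_Dn Dinf_ne)
lemma lim_C2: "(C2 \<longlongrightarrow> C2inf) sequentially"
  unfolding C2_def C2inf_def by (intro tendsto_intros lim_KK lim_u1n lim_w1n lim_Dn Dinf_ne)

end


context asy begin

lemma ev_Dn: "eventually (\<lambda>k. Dn k \<noteq> 0) sequentially"
  using lim_Dn Dinf_ne by (rule tendsto_imp_eventually_ne)

lemma ev_L1ne: "eventually (\<lambda>k. L1 k \<noteq> 1 \<and> L1 k \<noteq> aa k \<and> aa k * L1 k \<noteq> 1) sequentially"
proof -
  have "eventually (\<lambda>k. nn k * (L1 k - 1) > 0) sequentially"
    using lim_nL1 by (rule order_tendstoD) (use r in simp)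
  moreover have "eventually (\<lambda>k. nn k * (L1 k - aa k) > 0) sequentially"
    using lim_nLa by (rule order_tendstoD) (use r in simp)
  moreover have "eventually (\<lambda>k. nn k * (1 - aa k * L1 k) < 0) sequentially"
    using lim_naL by (rule order_tendstoD) (use r in simp)
  ultimately show ?thesis by eventually_elim auto
qed

lemma ev_L2ne: "eventually (\<lambda>k. L2 k \<noteq> 1 \<and> L2 k \<noteq> aa k \<and> aa k * L2 k \<noteq> 1) sequentially"
proof -
  have p: "pp g < 1" using pp_bounds[OF g] by simp
  have "eventually (\<lambda>k. L2 k - aa k < 0) sequentially"
    by (rule order_tendstoD[OF tendsto_diff[OF lim_L2 lim_a]]) (use p in simp)
  moreover have "eventually (\<lambda>k. L2 k < 1) sequentially"
    by (rule order_tendstoD[OF lim_L2]) (use p in simp)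
  moreover have "eventually (\<lambda>k. 1 - aa k * L2 k > 0) sequentially"
    by (rule order_tendstoD[OF tendsto_diff[OF tendsto_const tendsto_mult[OF lim_a lim_L2]]]) (use p in simp)
  ultimately show ?thesis by eventually_elim auto
qed

definition "Snice k = (nn k + 1) / nn k * KK k * (nn k * (1 - aa k))
   + C1n k * (L1 k ^ (h k + 1) - 1) / (nn k * (L1 k - 1))
   + C2 k * (L2 k ^ (h k + 1) - 1) / (L2 k - 1)"
definition "Sinf = 1 * (1/3) * r + C1inf * (EE - 1) / (3 * r) + C2inf * (pp g * pii / EE - 1) / (pp g - 1)"

lemma lim_n_inv: "((\<lambda>k. 1 / nn k) \<longlongrightarrow> 0) sequentially"
  using tendsto_inverse_0_at_top[OF real_h_at_top[OF h]] by (simp add: nn_def divide_inverse)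

lemma lim_n1: "((\<lambda>k. (nn k + 1) / nn k) \<longlongrightarrow> 1) sequentially"
proof -
  have "((\<lambda>k. 1 + 1 / nn k) \<longlongrightarrow> 1 + 0) sequentially" by (intro tendsto_intros lim_n_inv)
  moreover have "eventually (\<lambda>k. 1 + 1 / nn k = (nn k + 1) / nn k) sequentially"
    using ev_n by eventually_elim (simp add: field_simps)
  ultimately show ?thesis by (simp add: tendsto_cong)
qed

lemma lim_Snice: "(Snice \<longlongrightarrow> Sinf) sequentially"
  unfolding Snice_def Sinf_def
  by (intro tendsto_intros lim_n1 lim_KK lim_na lim_C1n lim_E1 lim_nL1 lim_C2 lim_P2 lim_L2)
     (use r pp_bounds[OF g] in auto)

definition "nuK k = nuf g (aa k) (h k)"

lemma ev_struct: "eventually (\<lambda>k. nn k > 0 \<and> 0 < aa k \<and> aa k < 1 \<and> Dq g (aa k) > 0 \<and> L1 k > 0 \<and> Dn k \<noteq> 0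
   \<and> L1 k \<noteq> 1 \<and> L1 k \<noteq> aa k \<and> aa k * L1 k \<noteq> 1 \<and> L2 k \<noteq> 1 \<and> L2 k \<noteq> aa k \<and> aa k * L2 k \<noteq> 1) sequentially"
  using ev_n ev_a ev_D ev_L1pos ev_Dn ev_L1ne ev_L2ne by eventually_elim auto

lemma coef_eqs:
  assumes "nn k > 0" "L1 k \<noteq> aa k" "aa k * L1 k \<noteq> 1" "Dn k \<noteq> 0"
  shows "Dt g (aa k) (h k) = nn k * Dn k" "nn k * cc1 g (aa k) (h k) = C1n k" "cc2 g (aa k) (h k) = C2 k"
    "cc0 g (aa k) = KK k * (1 - aa k)"
proof -
  have u: "uu1 g (aa k) = nn k * u1n k" using assms by (simp add: uu1_def u1n_def L1_def)
  have w: "ww1 g (aa k) (h k) = nn k * w1n k" using assms by (simp add: ww1_def w1n_def L1_def)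
  show D: "Dt g (aa k) (h k) = nn k * Dn k"
    unfolding Dt_def Dn_def u w by (simp add: U2_def W2_def algebra_simps)
  show "nn k * cc1 g (aa k) (h k) = C1n k"
    unfolding cc1_def C1n_def D using assms by (simp add: U2_def W2_def KK_def)
  show "cc2 g (aa k) (h k) = C2 k"
    unfolding cc2_def C2_def D u w using assms by (simp add: KK_def right_diff_distrib[symmetric])
  show "cc0 g (aa k) = KK k * (1 - aa k)" by (simp add: cc0_def KK_def)
qed

lemma sum_nuK: "eventually (\<lambda>k. (\<Sum>i\<le>h k. nuK k i) = Snice k) sequentially"
  using ev_struct
proof eventually_elim
  case (elim k)
  have c: "Dt g (aa k) (h k) = nn k * Dn k" "nn k * cc1 g (aa k) (h k) = C1n k" "cc2 g (aa k) (h k) = C2 k"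
    "cc0 g (aa k) = KK k * (1 - aa k)" using coef_eqs[of k] elim by auto
  have hn: "real (h k) + 1 = nn k + 1" by (simp add: nn_def)
  have c1: "cc1 g (aa k) (h k) = C1n k / nn k" using c(2) elim by (simp add: field_simps)
  have "(\<Sum>i\<le>h k. nuK k i) = (real (h k) + 1) * cc0 g (aa k) + cc1 g (aa k) (h k) * ((L1 k ^ (h k + 1) - 1) / (L1 k - 1))
      + cc2 g (aa k) (h k) * ((L2 k ^ (h k + 1) - 1) / (L2 k - 1))"
    unfolding nuK_def nuf_def sum_f_closed using elim by (simp add: gsum L1_def L2_def)
  also have "\<dots> = Snice k"
  proof -
    have t1: "(nn k + 1) * (KK k * (1 - aa k)) = (nn k + 1) / nn k * KK k * (nn k * (1 - aa k))"
      using elim by (simp add: field_simps)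
    have t2: "C1n k / nn k * ((L1 k ^ (h k + 1) - 1) / (L1 k - 1)) = C1n k * (L1 k ^ (h k + 1) - 1) / (nn k * (L1 k - 1))"
      by simp
    have t3: "C2 k * ((L2 k ^ (h k + 1) - 1) / (L2 k - 1)) = C2 k * (L2 k ^ (h k + 1) - 1) / (L2 k - 1)" by simp
    show ?thesis unfolding Snice_def hn c(3,4) c1 t1 t2 t3 ..
  qed
  finally show ?case .
qed

end


context asy begin

definition "Rnice k = (nn k + 1) / nn k * (KK k * (nn k * (1 - aa k))) * (KK k * (1 - aa k))
   + (C1n k)^2 * ((L1 k ^ (h k + 1))^2 - 1) / ((nn k * (L1 k - 1)) * (L1 k + 1)) * (1 / nn k)
   + (C2 k)^2 * ((L2 k ^ (h k + 1))^2 - 1) / ((L2 k)^2 - 1)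
   + 2 * (KK k * (1 - aa k)) * C1n k * (L1 k ^ (h k + 1) - 1) / (nn k * (L1 k - 1))
   + 2 * (KK k * (1 - aa k)) * C2 k * (L2 k ^ (h k + 1) - 1) / (L2 k - 1)
   + 2 * C1n k * C2 k * (pp g * pp g ^ h k - 1) / (pp g - 1) * (1 / nn k)"
definition "Rinf = (C2inf)^2 * ((pp g * pii / EE)^2 - 1) / ((pp g)^2 - 1)"

lemma lim_Rnice:
  assumes g2: "g > 3/2"
  shows "(Rnice \<longlongrightarrow> Rinf) sequentially"
proof -
  have p: "pp g < 1" "pp g > -1" using pp_bounds[OF g] g2 by (auto simp: pp_def field_simps)
  then have p2: "(pp g)^2 - 1 \<noteq> 0" using abs_square_less_1[of "pp g"] by auto
  have "(Rnice \<longlongrightarrow> 1 * ((1/3) * r) * ((1/3) * (1 - 1))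
     + (C1inf)^2 * (EE^2 - 1) / ((3 * r) * (1 + 1)) * 0
     + (C2inf)^2 * ((pp g * pii / EE)^2 - 1) / ((pp g)^2 - 1)
     + 2 * ((1/3) * (1 - 1)) * C1inf * (EE - 1) / (3 * r)
     + 2 * ((1/3) * (1 - 1)) * C2inf * (pp g * pii / EE - 1) / (pp g - 1)
     + 2 * C1inf * C2inf * (pp g * pii - 1) / (pp g - 1) * 0) sequentially"
    unfolding Rnice_def
    by (intro tendsto_intros lim_n1 lim_KK lim_na lim_a lim_C1n lim_E1 lim_nL1 lim_L1 lim_C2 lim_P2 lim_L2 lim_n_inv pi)
       (use r p p2 in auto)
  then show ?thesis by (simp add: Rinf_def)
qed

lemma sq_pow: "((x::real)^2)^n = (x^n)^2" by (metis power_mult mult.commute)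

lemma sum_nuK2:
  assumes g2: "g > 3/2"
  shows "eventually (\<lambda>k. (\<Sum>i\<le>h k. (nuK k i)^2) = Rnice k) sequentially"
proof -
  have p: "pp g < 1" "pp g > -1" using pp_bounds[OF g] g2 by (auto simp: pp_def field_simps)
  have ev2: "eventually (\<lambda>k. \<bar>L2 k\<bar> < 1) sequentially"
    using lim_L2 p by (intro order_tendstoD(2)[OF tendsto_rabs[OF lim_L2]]) auto
  show ?thesis using ev_struct ev2
  proof eventually_elim
    case (elim k)
    have c: "Dt g (aa k) (h k) = nn k * Dn k" "nn k * cc1 g (aa k) (h k) = C1n k" "cc2 g (aa k) (h k) = C2 k"
      "cc0 g (aa k) = KK k * (1 - aa k)" using coef_eqs[of k] elim by auto
    have c1: "cc1 g (aa k) (h k) = C1n k / nn k" using c(2) elim by (simp add: field_simps)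
    have hn: "real (h k) + 1 = nn k + 1" by (simp add: nn_def)
    have L12: "L1 k * L2 k = pp g" using elim by (simp add: L2_eq)
    have n1: "(L1 k)^2 \<noteq> 1" using elim by (auto simp: power2_eq_1_iff)
    have n2: "(L2 k)^2 \<noteq> 1" using elim(2) abs_square_less_1[of "L2 k"] by auto
    have n3: "pp g \<noteq> 1" using p by simp
    have l1: "L1 k \<noteq> 1" and l2: "L2 k \<noteq> 1" using elim by auto
    have S: "(\<Sum>i\<le>h k. (nuK k i)^2) = (real (h k) + 1) * (cc0 g (aa k))^2
        + (cc1 g (aa k) (h k))^2 * (\<Sum>i\<le>h k. ((L1 k)^2)^i)
        + (cc2 g (aa k) (h k))^2 * (\<Sum>i\<le>h k. ((L2 k)^2)^i)
        + 2 * cc0 g (aa k) * cc1 g (aa k) (h k) * (\<Sum>i\<le>h k. (L1 k)^i)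
        + 2 * cc0 g (aa k) * cc2 g (aa k) (h k) * (\<Sum>i\<le>h k. (L2 k)^i)
        + 2 * cc1 g (aa k) (h k) * cc2 g (aa k) (h k) * (\<Sum>i\<le>h k. (L1 k * L2 k)^i)"
      unfolding nuK_def nuf_def L1_def L2_def by (rule sum_f2_closed)
    have "(\<Sum>i\<le>h k. (nuK k i)^2) = (real (h k) + 1) * (cc0 g (aa k))^2
        + (cc1 g (aa k) (h k))^2 * ((((L1 k)^2) ^ (h k + 1) - 1) / ((L1 k)^2 - 1))
        + (cc2 g (aa k) (h k))^2 * ((((L2 k)^2) ^ (h k + 1) - 1) / ((L2 k)^2 - 1))
        + 2 * cc0 g (aa k) * cc1 g (aa k) (h k) * ((L1 k ^ (h k + 1) - 1) / (L1 k - 1))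
        + 2 * cc0 g (aa k) * cc2 g (aa k) (h k) * ((L2 k ^ (h k + 1) - 1) / (L2 k - 1))
        + 2 * cc1 g (aa k) (h k) * cc2 g (aa k) (h k) * ((pp g ^ (h k + 1) - 1) / (pp g - 1))"
      unfolding S L12 gsum[OF n1] gsum[OF n2] gsum[OF n3] gsum[OF l1] gsum[OF l2] by simp
    also have "\<dots> = Rnice k"
    proof -
      have t1: "(nn k + 1) * (KK k * (1 - aa k))^2 = (nn k + 1) / nn k * (KK k * (nn k * (1 - aa k))) * (KK k * (1 - aa k))"
        using elim by (simp add: field_simps power2_eq_square)
      have t2: "(C1n k / nn k)^2 * ((((L1 k)^2) ^ (h k + 1) - 1) / ((L1 k)^2 - 1))
          = (C1n k)^2 * ((L1 k ^ (h k + 1))^2 - 1) / ((nn k * (L1 k - 1)) * (L1 k + 1)) * (1 / nn k)"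
      proof -
        have "(L1 k)^2 - 1 = (L1 k - 1) * (L1 k + 1)" by (simp add: power2_eq_square algebra_simps)
        then show ?thesis by (simp add: sq_pow power_divide power_mult_distrib power2_eq_square mult_ac)
      qed
      have t3: "(C2 k)^2 * ((((L2 k)^2) ^ (h k + 1) - 1) / ((L2 k)^2 - 1)) = (C2 k)^2 * ((L2 k ^ (h k + 1))^2 - 1) / ((L2 k)^2 - 1)"
        by (simp only: sq_pow times_divide_eq_right)
      have t4: "2 * (KK k * (1 - aa k)) * (C1n k / nn k) * ((L1 k ^ (h k + 1) - 1) / (L1 k - 1))
          = 2 * (KK k * (1 - aa k)) * C1n k * (L1 k ^ (h k + 1) - 1) / (nn k * (L1 k - 1))" by simp
      have t5: "2 * (KK k * (1 - aa k)) * C2 k * ((L2 k ^ (h k + 1) - 1) / (L2 k - 1))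
          = 2 * (KK k * (1 - aa k)) * C2 k * (L2 k ^ (h k + 1) - 1) / (L2 k - 1)" by simp
      have t6: "2 * (C1n k / nn k) * C2 k * ((pp g ^ (h k + 1) - 1) / (pp g - 1))
          = 2 * C1n k * C2 k * (pp g * pp g ^ h k - 1) / (pp g - 1) * (1 / nn k)" by simp
      show ?thesis unfolding hn c(3,4) c1 t1 t2 t3 t4 t5 t6 Rnice_def ..
    qed
    finally show ?case .
  qed
qed

end


definition "omf a b N i = (1 - a) / (b * (1 - a) + a) + a / (b * (b * (1 - a) + a)) * (a * (b - 1) / b) ^ (N - i)"

context asy begin

lemma lim_aN: "((\<lambda>k. aa k ^ h k) \<longlongrightarrow> exp (- r)) sequentially"
proof -
  have "((\<lambda>k. real (h k) * (aa k - 1)) \<longlongrightarrow> - r) sequentially"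
    using tendsto_minus[OF lim_na] by (simp add: nn_def algebra_simps)
  then show ?thesis by (rule pow_limit[OF h]) (use ev_a in \<open>auto elim: eventually_mono\<close>)
qed

definition "Sonice b k = (nn k + 1) / nn k * (nn k * (1 - aa k)) / (b * (1 - aa k) + aa k)
   + aa k / (b * (b * (1 - aa k) + aa k)) * (aa k ^ h k * aa k * ((b - 1) / b) ^ h k * ((b - 1) / b) - 1) / (aa k * ((b - 1) / b) - 1)"
definition "Ronice b k = (nn k + 1) / nn k * (nn k * (1 - aa k)) / (b * (1 - aa k) + aa k) * ((1 - aa k) / (b * (1 - aa k) + aa k))
   + 2 * ((1 - aa k) / (b * (1 - aa k) + aa k)) * (aa k / (b * (b * (1 - aa k) + aa k)))
       * (aa k ^ h k * aa k * ((b - 1) / b) ^ h k * ((b - 1) / b) - 1) / (aa k * ((b - 1) / b) - 1)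
   + (aa k / (b * (b * (1 - aa k) + aa k)))^2
       * ((aa k ^ h k * aa k * ((b - 1) / b) ^ h k * ((b - 1) / b))^2 - 1) / ((aa k * ((b - 1) / b))^2 - 1)"

lemma mm_bounds: fixes b :: real assumes "b > 1/2" shows "\<bar>(b - 1) / b\<bar> < 1"
  using assms by (auto simp: abs_less_iff field_simps)

lemma lim_mm: fixes b :: real assumes "b > 1/2" shows "((\<lambda>k. ((b - 1) / b) ^ h k) \<longlongrightarrow> 0) sequentially"
  using filterlim_compose[OF LIMSEQ_power_zero[of "(b - 1) / b"] h] mm_bounds[OF assms] by simp

lemma lim_Sonice: assumes b: "b > 1/2" shows "(Sonice b \<longlongrightarrow> r + 1) sequentially"
proof -
  have m: "\<bar>(b - 1) / b\<bar> < 1" by (rule mm_bounds[OF b])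
  have m1: "1 * ((b - 1) / b) - 1 \<noteq> 0" using m by auto
  have "(Sonice b \<longlongrightarrow> 1 * r / (b * (1 - 1) + 1)
      + 1 / (b * (b * (1 - 1) + 1)) * (exp (- r) * 1 * 0 * ((b - 1) / b) - 1) / (1 * ((b - 1) / b) - 1)) sequentially"
    unfolding Sonice_def
    by (intro tendsto_intros lim_n1 lim_na lim_a lim_aN lim_mm[OF b]) (use b m1 in auto)
  moreover have "1 * r / (b * (1 - 1) + 1)
      + 1 / (b * (b * (1 - 1) + 1)) * (exp (- r) * 1 * 0 * ((b - 1) / b) - 1) / (1 * ((b - 1) / b) - 1) = r + 1"
    using b by (simp add: field_simps)
  ultimately show ?thesis by simp
qed

lemma lim_Ronice: assumes b: "b > 1/2" shows "(Ronice b \<longlongrightarrow> 1 / (b^2 * (1 - ((b - 1) / b)^2))) sequentially"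
proof -
  have m: "\<bar>(b - 1) / b\<bar> < 1" by (rule mm_bounds[OF b])
  have m1: "1 * ((b - 1) / b) - 1 \<noteq> 0" using m by auto
  have m2: "(1 * ((b - 1) / b))^2 - 1 \<noteq> 0" using m abs_square_less_1[of "(b-1)/b"] by auto
  have "(Ronice b \<longlongrightarrow> 1 * r / (b * (1 - 1) + 1) * ((1 - 1) / (b * (1 - 1) + 1))
   + 2 * ((1 - 1) / (b * (1 - 1) + 1)) * (1 / (b * (b * (1 - 1) + 1)))
       * (exp (- r) * 1 * 0 * ((b - 1) / b) - 1) / (1 * ((b - 1) / b) - 1)
   + (1 / (b * (b * (1 - 1) + 1)))^2
       * ((exp (- r) * 1 * 0 * ((b - 1) / b))^2 - 1) / ((1 * ((b - 1) / b))^2 - 1)) sequentially"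
    unfolding Ronice_def
    by (intro tendsto_intros lim_n1 lim_na lim_a lim_aN lim_mm[OF b]) (use b m1 m2 in auto)
  moreover have "1 * r / (b * (1 - 1) + 1) * ((1 - 1) / (b * (1 - 1) + 1))
   + 2 * ((1 - 1) / (b * (1 - 1) + 1)) * (1 / (b * (b * (1 - 1) + 1)))
       * (exp (- r) * 1 * 0 * ((b - 1) / b) - 1) / (1 * ((b - 1) / b) - 1)
   + (1 / (b * (b * (1 - 1) + 1)))^2
       * ((exp (- r) * 1 * 0 * ((b - 1) / b))^2 - 1) / ((1 * ((b - 1) / b))^2 - 1)
     = 1 / (b^2 * (1 - ((b - 1) / b)^2))"
  proof -
    have gen: "(1 / b)^2 * (- 1) / (M - 1) = 1 / (b^2 * (1 - M))" if "M \<noteq> 1" "b \<noteq> 0" for M b :: real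
      using that by (simp add: field_simps)
    have M: "((b - 1) / b)^2 \<noteq> 1" using m2 by simp
    have "1 * r / (b * (1 - 1) + 1) * ((1 - 1) / (b * (1 - 1) + 1))
     + 2 * ((1 - 1) / (b * (1 - 1) + 1)) * (1 / (b * (b * (1 - 1) + 1)))
       * (exp (- r) * 1 * 0 * ((b - 1) / b) - 1) / (1 * ((b - 1) / b) - 1)
     + (1 / (b * (b * (1 - 1) + 1)))^2
       * ((exp (- r) * 1 * 0 * ((b - 1) / b))^2 - 1) / ((1 * ((b - 1) / b))^2 - 1)
     = (1 / b)^2 * (- 1) / (((b - 1) / b)^2 - 1)" by simp
    also have "\<dots> = 1 / (b^2 * (1 - ((b - 1) / b)^2))" by (rule gen[OF M]) (use b in simp)
    finally show ?thesis .
  qed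
  ultimately show ?thesis by simp
qed

end


context asy begin

lemma sum_omf:
  assumes b: "b > 1/2"
  shows "eventually (\<lambda>k. (\<Sum>i\<le>h k. omf (aa k) b (h k) i) = Sonice b k
     \<and> (\<Sum>i\<le>h k. (omf (aa k) b (h k) i)^2) = Ronice b k) sequentially"
  using ev_n ev_a
proof eventually_elim
  case (elim k)
  let ?a = "aa k" and ?m = "aa k * ((b - 1) / b)"
  have m: "\<bar>(b - 1) / b\<bar> < 1" by (rule mm_bounds[OF b])
  have am0: "aa k * \<bar>(b - 1) / b\<bar> \<le> 1 * \<bar>(b - 1) / b\<bar>" by (rule mult_right_mono) (use elim in auto)
  have am: "\<bar>?m\<bar> < 1" using m elim am0 by (simp add: abs_mult)
  have m1: "?m \<noteq> 1" using am by auto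
  have m2: "?m^2 \<noteq> 1" using am abs_square_less_1[of ?m] by auto
  have me: "?a * (b - 1) / b = ?m" by simp
  have pw: "?m ^ (h k + 1) = ?a ^ h k * ?a * ((b - 1) / b) ^ h k * ((b - 1) / b)"
  proof -
    have "(x*y)^(n+1) = x^n*x*y^n*y" for x y :: real and n :: nat by (simp add: power_mult_distrib mult_ac)
    then show ?thesis .
  qed
  have hn: "real (h k) + 1 = nn k + 1" by (simp add: nn_def)
  have d0: "(nn k + 1) * ((1 - ?a) / (b * (1 - ?a) + ?a)) = (nn k + 1) / nn k * (nn k * (1 - ?a)) / (b * (1 - ?a) + ?a)"
    using elim by simp
  have "(\<Sum>i\<le>h k. omf ?a b (h k) i) = (real (h k) + 1) * ((1 - ?a) / (b * (1 - ?a) + ?a))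
      + ?a / (b * (b * (1 - ?a) + ?a)) * (\<Sum>i\<le>h k. ?m ^ i)"
    unfolding omf_def me by (rule sum_g_closed[unfolded of_nat_Suc Suc_eq_plus1])
  also have "\<dots> = Sonice b k"
    unfolding gsum[OF m1] pw hn Sonice_def d0 by simp
  finally have S1: "(\<Sum>i\<le>h k. omf ?a b (h k) i) = Sonice b k" .
  have "(\<Sum>i\<le>h k. (omf ?a b (h k) i)^2) = (real (h k) + 1) * ((1 - ?a) / (b * (1 - ?a) + ?a))^2
      + 2 * ((1 - ?a) / (b * (1 - ?a) + ?a)) * (?a / (b * (b * (1 - ?a) + ?a))) * (\<Sum>i\<le>h k. ?m ^ i)
      + (?a / (b * (b * (1 - ?a) + ?a)))^2 * (\<Sum>i\<le>h k. (?m^2) ^ i)"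
    unfolding omf_def me by (rule sum_g2_closed[unfolded of_nat_Suc Suc_eq_plus1])
  also have "\<dots> = Ronice b k"
  proof -
    have q: "(?m^2) ^ (h k + 1) = (?m ^ (h k + 1))^2" by (rule sq_pow)
    have d0': "(nn k + 1) * ((1 - ?a) / (b * (1 - ?a) + ?a))^2 = (nn k + 1) / nn k * (nn k * (1 - ?a)) / (b * (1 - ?a) + ?a) * ((1 - ?a) / (b * (1 - ?a) + ?a))"
      using elim by (simp add: power2_eq_square)
    show ?thesis unfolding gsum[OF m1] gsum[OF m2] q pw hn Ronice_def d0' by simp
  qed
  finally show ?case using S1 by simp
qed

end


context asy begin

lemma aN_aa: assumes "r = \<rho> * T" shows "aN \<rho> T (h k) = aa k"
  unfolding aN_def aa_def nn_def using assms by simp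

lemma nu_eq_ev:
  assumes rr: "r = \<rho> * T" and gg: "g = 3/2 + 2*\<theta>" and th: "\<theta> \<ge> 0" and \<rho>: "\<rho> > 0" and T: "T > 0"
  shows "eventually (\<lambda>k. \<forall>i \<le> h k. nu \<rho> T \<theta> (h k) $ i = nuK k i) sequentially"
  using ev_struct
proof eventually_elim
  case (elim k)
  have hk: "h k > 0" using elim by (simp add: nn_def)
  have sol: "2 * Fs (aN \<rho> T (h k)) (nuK k) i + Bs (aN \<rho> T (h k)) (h k) (nuK k) i + (3/2 + 2*\<theta>) * nuK k i = 1"
    if "i \<le> h k" for i
    unfolding aN_aa[OF rr] nuK_def gg[symmetric]
    by (rule nuf_solves[OF g]) (use elim that coef_eqs(1)[of k] in \<open>auto simp: L1_def L2_def\<close>)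
  show ?case using nu_eq[OF \<rho> T hk th sol] by blast
qed

lemma Sn_ev:
  assumes rr: "r = \<rho> * T" and gg: "g = 3/2 + 2*\<theta>" and th: "\<theta> \<ge> 0" and \<rho>: "\<rho> > 0" and T: "T > 0"
  shows "eventually (\<lambda>k. Sn \<rho> T \<theta> (h k) = Snice k) sequentially"
  using nu_eq_ev[OF assms] sum_nuK
  by eventually_elim (simp add: Sn_def)

lemma Rn_ev:
  assumes rr: "r = \<rho> * T" and gg: "g = 3/2 + 2*\<theta>" and th: "\<theta> > 0" and \<rho>: "\<rho> > 0" and T: "T > 0"
  shows "eventually (\<lambda>k. Rn \<rho> T \<theta> (h k) = Rnice k) sequentially"
proof -
  have g2: "g > 3/2" using gg th by simp
  show ?thesis using nu_eq_ev[OF rr gg less_imp_le[OF th] \<rho> T] sum_nuK2[OF g2]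
    by eventually_elim (simp add: Rn_def)
qed

lemma om_ev:
  assumes rr: "r = \<rho> * T" and th: "\<theta> > 0" and \<rho>: "\<rho> > 0" and T: "T > 0"
  shows "eventually (\<lambda>k. So \<rho> T \<theta> (h k) = Sonice (1/2 + 2*\<theta>) k \<and> Ro \<rho> T \<theta> (h k) = Ronice (1/2 + 2*\<theta>) k) sequentially"
proof -
  have b: "1/2 + 2*\<theta> > 1/2" using th by simp
  show ?thesis using ev_n ev_a sum_omf[OF b]
  proof eventually_elim
    case (elim k)
    have hk: "h k > 0" using elim by (simp add: nn_def)
    have sol: "Bs (aN \<rho> T (h k)) (h k) (omf (aa k) (1/2 + 2*\<theta>) (h k)) i + (1/2 + 2*\<theta>) * omf (aa k) (1/2 + 2*\<theta>) (h k) i = 1"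
      if "i \<le> h k" for i
      unfolding aN_aa[OF rr] omf_def
      by (rule closed_om) (use elim that th in auto)
    have "\<forall>i \<le> h k. omega \<rho> T \<theta> (h k) $ i = omf (aa k) (1/2 + 2*\<theta>) (h k) i"
      using omega_eq[OF \<rho> T hk less_imp_le[OF th] sol] by blast
    then show ?case using elim by (simp add: So_def Ro_def)
  qed
qed

end


lemma S_closed:
  fixes p pii E r :: real
  assumes p: "p < 1" and E: "E > 1" and r: "r > 0" and s: "\<bar>p * pii\<bar> \<le> 1"
  defines "W2 \<equiv> p * pii / E / (1 - p)"
  defines "D \<equiv> 1 / (4 * r) * W2 - 1 / (p - 1) * (E / (- 2 * r))"
  defines "C1 \<equiv> - (1/3) * (W2 - 1 / (p - 1)) / D"
  defines "C2 \<equiv> - (1/3) * (1 / (4 * r) - E / (- 2 * r)) / D"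
  shows "1 * (1/3) * r + C1 * (E - 1) / (3 * r) + C2 * (p * pii / E - 1) / (p - 1)
      = r/3 + (4 * (p * pii + E) * (E - 1) + 3 * (1 + 2 * E) * (E - p * pii)) / (9 * (2 * E^2 - p * pii))"
    and "C2 = E * (1 - p) * (1 + 2 * E) / (3 * (2 * E^2 - p * pii))"
proof -
  define q where "q = 1 - p"
  define s where "s = p * pii"
  have q: "q > 0" using p by (simp add: q_def)
  have pq: "p - 1 = - q" by (simp add: q_def)
  have E2: "2 * E^2 > 1" using one_less_power[OF E, of 2] by simp
  have sE: "2 * E^2 - s > 0" using s E2 by (simp add: s_def abs_le_iff)
  have Dv: "D = (s - 2 * E^2) / (4 * r * E * q)"
    unfolding D_def W2_def pq q_def[symmetric] s_def[symmetric] mult.assoc[symmetric] using q E r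
    by (simp add: field_simps power2_eq_square)
  have Dn: "s - 2 * E^2 \<noteq> 0" using sE by simp
  have C2v: "C2 = E * q * (1 + 2 * E) / (3 * (2 * E^2 - s))"
    unfolding C2_def Dv using q E r Dn sE by (simp add: field_simps)
  have C1v: "C1 = 4 * r * (s + E) / (3 * (2 * E^2 - s))"
    unfolding C1_def Dv W2_def pq q_def[symmetric] s_def[symmetric] using q E r Dn sE
    by (simp add: field_simps)
  show "C2 = E * (1 - p) * (1 + 2 * E) / (3 * (2 * E^2 - p * pii))" using C2v by (simp add: q_def s_def)
  show "1 * (1/3) * r + C1 * (E - 1) / (3 * r) + C2 * (p * pii / E - 1) / (p - 1)
      = r/3 + (4 * (p * pii + E) * (E - 1) + 3 * (1 + 2 * E) * (E - p * pii)) / (9 * (2 * E^2 - p * pii))"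
  proof -
    define w where "w = 2 * E^2 - s"
    have w: "w > 0" using sE by (simp add: w_def)
    have e: "1 * (1/3) * r + 4 * r * (s + E) / (3 * w) * (E - 1) / (3 * r) + E * q * (1 + 2 * E) / (3 * w) * (s / E - 1) / (- q)
      = r/3 + (4 * (s + E) * (E - 1) + 3 * (1 + 2 * E) * (E - s)) / (9 * w)"
      using w q E r by (simp add: field_simps)
    show ?thesis using e unfolding C1v C2v pq s_def[symmetric] w_def by simp
  qed
qed
lemma L_ident:
  fixes E r :: real
  assumes E: "E > 1" and r: "r > 0"
  defines "P \<equiv> 6*r*E + 10*E - 1"
  defines "Q \<equiv> 3*r*(2*E^2+1) + 10*E^2 + E + 7"
  shows "1 / (3 * (Q / (9 * (2*E^2+1)))) - 1 / (3 * (P / (18 * E))) + 2 * ((1 + 2*E)^2 / (144 * E^2)) / (3 * (P / (18*E))^2)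
    = 3 * (2 * E + 1)^2 * (3 * (r + 3) + 2 * E^2 * (3*r + 5) - E * (12*r + 19))
      / (2 * (1 - 2 * E * (3*r + 5))^2 * (3*r + E + 2 * E^2 * (3*r + 5) + 7))"
proof -
  have P: "P > 0" using E r unfolding P_def by (smt (verit) mult_pos_pos)
  have Q: "Q > 0" using E r unfolding Q_def by (simp add: add_pos_pos)
  have P2: "(1 - 2 * E * (3*r + 5))^2 = P^2" unfolding P_def by (simp add: power2_eq_square algebra_simps)
  have Q2: "3*r + E + 2 * E^2 * (3*r + 5) + 7 = Q" unfolding Q_def by (simp add: algebra_simps)
  show ?thesis unfolding P2 Q2 using P Q E
    by (simp add: field_simps power2_eq_square) (simp add: P_def Q_def algebra_simps power2_eq_square)
qed

lemma L_pos:
  fixes E r :: real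
  assumes E: "E \<ge> 1 + 3*r" and r: "r > 0"
  shows "3 * (r + 3) + 2 * E^2 * (3*r + 5) - E * (12*r + 19) > 0"
proof -
  define f where "f e = 3 * (r + 3) + 2 * e^2 * (3*r + 5) - e * (12*r + 19)" for e
  have f1: "f (1 + 3*r) = 54*r^3 + 90*r^2" unfolding f_def by (simp add: power2_eq_square power3_eq_cube algebra_simps)
  have "f E - f (1 + 3*r) = (E - (1 + 3*r)) * (2 * (3*r+5) * (E + 1 + 3*r) - (12*r + 19))"
    unfolding f_def by (simp add: power2_eq_square algebra_simps)
  moreover have "2 * (3*r+5) * (E + 1 + 3*r) - (12*r + 19) > 0"
  proof -
    have "2 * (3*r+5) * (E + 1 + 3*r) \<ge> 2 * (3*r+5) * 2" using E r by (intro mult_left_mono) auto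
    then show ?thesis using r by simp
  qed
  ultimately have "f E \<ge> f (1 + 3*r)" using E
    by (smt (verit) mult_nonneg_nonneg)
  moreover have "f (1 + 3*r) > 0" unfolding f1 using r by (simp add: add_pos_pos)
  ultimately show ?thesis unfolding f_def by simp
qed


lemma liminf_two:
  fixes f :: "nat \<Rightarrow> real"
  assumes e: "(\<lambda>n. f (2*n)) \<longlonglongrightarrow> A" and o: "(\<lambda>n. f (2*n+1)) \<longlonglongrightarrow> B" and AB: "A \<le> B"
  shows "liminf (\<lambda>N. ereal (f N)) = ereal A"
proof (rule antisym)
  have sm: "strict_mono (\<lambda>n::nat. 2*n)" by (rule strict_monoI) simp
  have "liminf (\<lambda>N. ereal (f N)) \<le> liminf ((\<lambda>N. ereal (f N)) \<circ> (\<lambda>n. 2*n))" by (rule liminf_subseq_mono[OF sm])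
  also have "\<dots> = ereal A"
    using lim_imp_Liminf[OF trivial_limit_sequentially tendsto_ereal[OF e]] by (simp add: o_def)
  finally show "liminf (\<lambda>N. ereal (f N)) \<le> ereal A" .
  show "ereal A \<le> liminf (\<lambda>N. ereal (f N))"
    unfolding le_Liminf_iff
  proof (intro allI impI)
    fix y assume y: "y < ereal A"
    have y2: "y < ereal B" using y AB by (meson ereal_less_eq(3) less_le_trans)
    have "eventually (\<lambda>n. y < ereal (f (2*n))) sequentially" using order_tendstoD(1)[OF tendsto_ereal[OF e] y] .
    moreover have "eventually (\<lambda>n. y < ereal (f (2*n+1))) sequentially" using order_tendstoD(1)[OF tendsto_ereal[OF o] y2] .
    ultimately have "eventually (\<lambda>n. y < ereal (f (2*n)) \<and> y < ereal (f (2*n+1))) sequentially"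
      by (rule eventually_conj)
    then obtain M where M: "\<And>n. n \<ge> M \<Longrightarrow> y < ereal (f (2*n)) \<and> y < ereal (f (2*n+1))"
      unfolding eventually_sequentially by blast
    show "eventually (\<lambda>N. y < ereal (f N)) sequentially"
      unfolding eventually_sequentially
    proof (intro exI[of _ "2*M"] allI impI)
      fix N assume N: "N \<ge> 2*M"
      have d: "N div 2 \<ge> M" using N by simp
      show "y < ereal (f N)"
      proof (cases "even N")
        case True
        then have "N = 2 * (N div 2)" by simp
        then show ?thesis using M[OF d] by metis
      next
        case False
        then have "N = 2 * (N div 2) + 1" by simp
        then show ?thesis using M[OF d] by metis
      qed
    qed
  qed
qed

context asy begin

lemma Sinf_val: "Sinf = r/3 + (4 * (pp g * pii + EE) * (EE - 1) + 3 * (1 + 2 * EE) * (EE - pp g * pii)) / (9 * (2 * EE^2 - pp g * pii))"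
  unfolding Sinf_def C1inf_def C2inf_def Dinf_def W2inf_def
  by (rule S_closed(1)) (use pp_bounds[OF g] EE_gt1 r pib in \<open>auto simp: abs_mult mult_le_one\<close>)

lemma C2inf_val: "C2inf = EE * (1 - pp g) * (1 + 2 * EE) / (3 * (2 * EE^2 - pp g * pii))"
  unfolding C2inf_def Dinf_def W2inf_def
  by (rule S_closed(2)) (use pp_bounds[OF g] EE_gt1 r pib in \<open>auto simp: abs_mult mult_le_one\<close>)

lemma Sinf_pos: "Sinf > 0"
proof -
  have p: "\<bar>pp g * pii\<bar> \<le> 1" using pp_bounds[OF g] pib by (auto simp: abs_mult mult_le_one)
  have E: "EE > 1" by (rule EE_gt1)
  have E2: "2 * EE^2 > 1" using one_less_power[OF E, of 2] by simp
  have "4 * (pp g * pii + EE) * (EE - 1) \<ge> 0" using p E by (intro mult_nonneg_nonneg) (auto simp: abs_le_iff)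
  moreover have "3 * (1 + 2 * EE) * (EE - pp g * pii) \<ge> 0" using p E by (intro mult_nonneg_nonneg) (auto simp: abs_le_iff)
  moreover have "9 * (2 * EE^2 - pp g * pii) > 0" using p E2 by (simp add: abs_le_iff mult.commute)
  ultimately show ?thesis unfolding Sinf_val using r by (intro add_pos_nonneg) (auto intro: divide_nonneg_pos)
qed

end





lemma pp_lt1: assumes "\<theta> > 0" shows "\<bar>pp (3/2 + 2*\<theta>)\<bar> < 1"
  using assms by (auto simp: pp_def abs_less_iff field_simps)

lemma pp_32: "pp (3/2) = -1" by (simp add: pp_def)

lemma asyA: assumes "r > 0" "\<theta> > 0" shows "asy r (3/2 + 2*\<theta>) id 0"
  by unfold_locales (use assms pp_lt1[OF assms(2)] filterlim_ident[of sequentially] in \<open>auto simp: id_def LIMSEQ_power_zero\<close>)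

lemma sm2: "strict_mono (\<lambda>n::nat. 2*n)" "strict_mono (\<lambda>n::nat. 2*n+1)"
  by (auto intro!: strict_monoI)

lemma asyB0: assumes "r > 0" shows "asy r (3/2) (\<lambda>n. 2*n) 1"
  by unfold_locales (use assms filterlim_subseq[OF sm2(1)] in \<open>auto simp: pp_32\<close>)

lemma asyB1: assumes "r > 0" shows "asy r (3/2) (\<lambda>n. 2*n+1) (-1)"
  by unfold_locales (use assms filterlim_subseq[OF sm2(2)] in \<open>auto simp: pp_32\<close>)

lemma Rinf_val:
  assumes "r > 0" "\<theta> > 0"
  shows "\<theta> * asy.Rinf r (3/2 + 2*\<theta>) 0 = (1 + 2 * exp (3*r))^2 / (144 * (exp (3*r))^2)"
proof -
  interpret A: asy r "3/2 + 2*\<theta>" id 0 by (rule asyA[OF assms])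
  let ?p = "pp (3/2 + 2*\<theta>)" and ?E = "exp (3*r)"
  have E: "A.EE = ?E" by (simp add: A.EE_def)
  have p: "?p = (4*\<theta> - 1) / (4*\<theta> + 1)" using assms by (simp add: pp_def field_simps)
  have C2: "A.C2inf = (1 - ?p) * (1 + 2 * ?E) / (6 * ?E)"
    unfolding A.C2inf_val E by (simp add: power2_eq_square field_simps)
  have p1: "1 - ?p = 2 / (4*\<theta> + 1)" "1 + ?p = 8 * \<theta> / (4*\<theta> + 1)"
    unfolding p using assms by (simp_all add: field_simps)
  have R: "A.Rinf = A.C2inf^2 / ((1 - ?p) * (1 + ?p))"
  proof -
    have "(?p)^2 - 1 = - ((1 - ?p) * (1 + ?p))" by (simp add: power2_eq_square algebra_simps)
    then show ?thesis by (simp add: A.Rinf_def)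
  qed
  have E0: "?E > 0" by simp
  have gen: "t * ((2 / u) * (1 + 2 * E) / (6 * E))^2 / ((2 / u) * (8 * t / u)) = (1 + 2 * E)^2 / (144 * E^2)"
    if "t > 0" "u > 0" "E > 0" for t u E :: real
    using that by (simp add: field_simps power2_eq_square)
  have u: "4 * \<theta> + 1 > 0" using assms by simp
  have "\<theta> * A.Rinf = \<theta> * ((2 / (4*\<theta> + 1)) * (1 + 2 * ?E) / (6 * ?E))^2 / ((2 / (4*\<theta> + 1)) * (8 * \<theta> / (4*\<theta> + 1)))"
    unfolding R C2 p1 by simp
  also have "\<dots> = (1 + 2 * ?E)^2 / (144 * ?E^2)" by (rule gen[OF assms(2) u E0])
  finally show ?thesis .
qed

lemma Roinf_val:
  fixes \<theta> :: real
  assumes "\<theta> > 0"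
  shows "\<theta> * (1 / ((1/2 + 2*\<theta>)^2 * (1 - (((1/2 + 2*\<theta>) - 1) / (1/2 + 2*\<theta>))^2))) = 1/4"
proof -
  have gen: "b^2 * (1 - ((b - 1) / b)^2) = 2 * b - 1" if "b \<noteq> 0" for b :: real
    using that by (simp add: field_simps power2_eq_square)
  have "(1/2 + 2*\<theta>)^2 * (1 - (((1/2 + 2*\<theta>) - 1) / (1/2 + 2*\<theta>))^2) = 4 * \<theta>"
    using gen[of "1/2 + 2*\<theta>"] assms by simp
  then show ?thesis using assms by simp
qed

lemma TR_alg:
  fixes E r P X Y :: real
  assumes "E > 0" "P > 0" "r > 0"
  shows "(X/2 * ((1 + 2*E)^2 / (144 * E^2) / (P / (18 * E))^2) + Y/2 * (1/4 / (r + 1)^2))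
    = 9 * X * (1 + 2*E)^2 / (8 * P^2) + Y / (8 * (r + 1)^2)"
  using assms by (simp add: field_simps power2_eq_square)

theorem corollary3p5:
  fixes \<rho> T \<theta> x y s0 :: real
  assumes "\<rho> > 0" and "T > 0" and "\<theta> > 0"
  defines "L \<equiv> 3 * (x+y)^2 * (2 * exp (3*\<rho>*T) + 1)^2
      * (3 * (\<rho>*T + 3) + 2 * exp (6*\<rho>*T) * (3*\<rho>*T + 5) - exp (3*\<rho>*T) * (12*\<rho>*T + 19))
      / (2 * (1 - 2 * exp (3*\<rho>*T) * (3*\<rho>*T + 5))^2
         * (3*\<rho>*T + exp (3*\<rho>*T) + 2 * exp (6*\<rho>*T) * (3*\<rho>*T + 5) + 7))"
  shows "((\<lambda>N. TR \<rho> T \<theta> x y N) \<longlonglongrightarrow>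
           9 * (x+y)^2 * (1 + 2 * exp (3*\<rho>*T))^2 / (8 * (1 - 2 * exp (3*\<rho>*T) * (5 + 3*\<rho>*T))^2)
           + (x-y)^2 / (8 * (\<rho>*T + 1)^2))
       \<and> liminf (\<lambda>N. ereal (TR \<rho> T \<theta> x y N - TC \<rho> T \<theta> s0 x y N)) = ereal L
       \<and> L \<ge> 0 \<and> (x \<noteq> - y \<longrightarrow> L > 0)"
proof -
  define r where "r = \<rho> * T"
  have r: "r > 0" using assms by (simp add: r_def)
  define E where "E = exp (3*r)"
  have E1: "E > 1" using r by (simp add: E_def)
  have E0: "E > 0" using E1 by simp
  have Ege: "E \<ge> 1 + 3*r" unfolding E_def using exp_ge_add_one_self[of "3*r"] by simp
  have e3: "exp (3*\<rho>*T) = E" by (simp add: E_def r_def mult.assoc)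
  have e6: "exp (6*\<rho>*T) = E^2"
  proof -
    have "6*\<rho>*T = 3*r + 3*r" by (simp add: r_def)
    then show ?thesis by (simp add: E_def exp_add[symmetric] power2_eq_square)
  qed
  have rT: "3*\<rho>*T = 3*r" "\<rho>*T = r" "12*\<rho>*T = 12*r" by (simp_all add: r_def)
  have th0: "\<theta> \<ge> 0" using assms by simp
  have g2: "3/2 + 2*\<theta> > 3/2" using assms by simp
  have b: "1/2 + 2*\<theta> > 1/2" using assms by simp
  interpret A: asy r "3/2 + 2*\<theta>" id 0 by (rule asyA[OF r assms(3)])
  interpret B0: asy r "3/2" "\<lambda>n. 2*n" 1 by (rule asyB0[OF r])
  interpret B1: asy r "3/2" "\<lambda>n. 2*n+1" "-1" by (rule asyB1[OF r])
  have AE: "A.EE = E" "B0.EE = E" "B1.EE = E" by (simp_all add: A.EE_def B0.EE_def B1.EE_def E_def)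
  have z32: "(3/2::real) = 3/2 + 2*0" by simp

  have SA: "(\<lambda>N. Sn \<rho> T \<theta> N) \<longlonglongrightarrow> A.Sinf"
    using Lim_transform_eventually[OF A.lim_Snice] A.Sn_ev[OF r_def refl th0 assms(1,2)]
    by (simp add: eq_commute)
  have RA: "(\<lambda>N. Rn \<rho> T \<theta> N) \<longlonglongrightarrow> A.Rinf"
    using Lim_transform_eventually[OF A.lim_Rnice[OF g2]] A.Rn_ev[OF r_def refl assms(3,1,2)]
    by (simp add: eq_commute)
  have SoA: "(\<lambda>N. So \<rho> T \<theta> N) \<longlonglongrightarrow> r + 1"
  proof -
    have "eventually (\<lambda>N. A.Sonice (1/2 + 2*\<theta>) N = So \<rho> T \<theta> N) sequentially"
      using A.om_ev[OF r_def assms(3,1,2)] by eventually_elim simp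
    then show ?thesis by (rule Lim_transform_eventually[OF A.lim_Sonice[OF b]])
  qed
  have RoA: "(\<lambda>N. Ro \<rho> T \<theta> N) \<longlonglongrightarrow> 1 / ((1/2 + 2*\<theta>)^2 * (1 - (((1/2 + 2*\<theta>) - 1) / (1/2 + 2*\<theta>))^2))"
  proof -
    have "eventually (\<lambda>N. A.Ronice (1/2 + 2*\<theta>) N = Ro \<rho> T \<theta> N) sequentially"
      using A.om_ev[OF r_def assms(3,1,2)] by eventually_elim simp
    then show ?thesis by (rule Lim_transform_eventually[OF A.lim_Ronice[OF b]])
  qed
  have S0e: "(\<lambda>n. Sn \<rho> T 0 (2*n)) \<longlonglongrightarrow> B0.Sinf"
    using Lim_transform_eventually[OF B0.lim_Snice] B0.Sn_ev[OF r_def z32 order_refl assms(1,2)]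
    by (simp add: eq_commute)
  have S0o: "(\<lambda>n. Sn \<rho> T 0 (2*n+1)) \<longlonglongrightarrow> B1.Sinf"
    using Lim_transform_eventually[OF B1.lim_Snice] B1.Sn_ev[OF r_def z32 order_refl assms(1,2)]
    by (simp add: eq_commute)

  define P where "P = 6*r*E + 10*E - 1"
  have rE: "6*r*E > 0" using r E0 by simp
  have P: "P > 0" using E1 rE unfolding P_def by linarith
  have SAv: "A.Sinf = P / (18 * E)"
    unfolding A.Sinf_val AE P_def using E0 by (simp add: field_simps power2_eq_square)
  have RAv: "\<theta> * A.Rinf = (1 + 2 * E)^2 / (144 * E^2)"
    using Rinf_val[OF r assms(3)] by (simp add: E_def)
  have ROv: "\<theta> * (1 / ((1/2 + 2*\<theta>)^2 * (1 - (((1/2 + 2*\<theta>) - 1) / (1/2 + 2*\<theta>))^2))) = 1/4"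
    by (rule Roinf_val[OF assms(3)])
  define Q where "Q = 3*r*(2*E^2+1) + 10*E^2 + E + 7"
  define Q' where "Q' = 3*r*(2*E^2-1) + 10*E^2 - 3*E - 7"
  have E2: "2*E^2 - 1 > 0" using one_less_power[OF E1, of 2] by simp
  have gen3: "r/3 + N / (9 * d) = (3*r*d + N) / (9 * d)" if "d > 0" for N d :: real
    using that by (simp add: field_simps)
  have B0v: "B0.Sinf = Q / (9 * (2*E^2+1))"
  proof -
    have n: "4 * (- 1 * 1 + E) * (E - 1) + 3 * (1 + 2 * E) * (E - - 1 * 1) = 10*E^2 + E + 7"
      by (simp add: power2_eq_square algebra_simps)
    have d: "2 * E^2 - - 1 * 1 = 2*E^2+1" by simp
    have "B0.Sinf = (3*r*(2*E^2+1) + (10*E^2 + E + 7)) / (9 * (2*E^2+1))"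
      unfolding B0.Sinf_val pp_32 AE n d by (rule gen3) (use E2 in simp)
    then show ?thesis by (simp add: Q_def add.assoc)
  qed
  have B1v: "B1.Sinf = Q' / (9 * (2*E^2-1))"
  proof -
    have n: "4 * (- 1 * - 1 + E) * (E - 1) + 3 * (1 + 2 * E) * (E - - 1 * - 1) = 10*E^2 - 3*E - 7"
      by (simp add: power2_eq_square algebra_simps)
    have d: "2 * E^2 - - 1 * - 1 = 2*E^2-1" by simp
    have "B1.Sinf = (3*r*(2*E^2-1) + (10*E^2 - 3*E - 7)) / (9 * (2*E^2-1))"
      unfolding B1.Sinf_val pp_32 AE n d by (rule gen3) (use E2 in simp)
    then show ?thesis by (simp add: Q'_def algebra_simps)
  qed
  have SApos: "A.Sinf > 0" by (rule A.Sinf_pos)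
  have S0epos: "B0.Sinf > 0" by (rule B0.Sinf_pos)
  have S0opos: "B1.Sinf > 0" by (rule B1.Sinf_pos)
  have cmp: "B1.Sinf \<le> B0.Sinf"
  proof -
    have "(10*E^2 - 3*E - 7) * (2*E^2+1) \<le> (10*E^2 + E + 7) * (2*E^2-1)"
    proof -
      have "(10*E^2 + E + 7) * (2*E^2-1) - (10*E^2 - 3*E - 7) * (2*E^2+1) = 8*E^3 + 8*E^2 + 2*E"
        by (simp add: power2_eq_square power3_eq_cube algebra_simps)
      moreover have "8*E^3 + 8*E^2 + 2*E > 0" using E0 by (simp add: add_pos_pos)
      ultimately show ?thesis by linarith
    qed
    then have h1: "(10*E^2 - 3*E - 7) / (2*E^2-1) \<le> (10*E^2 + E + 7) / (2*E^2+1)"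
      using E2 by (simp add: divide_simps)
    have h2: "(10*E^2 - 3*E - 7) / (9 * (2*E^2-1)) = ((10*E^2 - 3*E - 7) / (2*E^2-1)) / 9" by simp
    have h3: "(10*E^2 + E + 7) / (9 * (2*E^2+1)) = ((10*E^2 + E + 7) / (2*E^2+1)) / 9" by simp
    have "(10*E^2 - 3*E - 7) / (9 * (2*E^2-1)) \<le> (10*E^2 + E + 7) / (9 * (2*E^2+1))"
      unfolding h2 h3 by (rule divide_right_mono[OF h1]) simp
    moreover have "B0.Sinf = r/3 + (10*E^2 + E + 7) / (9 * (2*E^2+1))"
    proof -
      have "r/3 + (10*E^2 + E + 7) / (9 * (2*E^2+1)) = (3*r*(2*E^2+1) + (10*E^2 + E + 7)) / (9 * (2*E^2+1))"
        by (rule gen3) (use E2 in simp)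
      then show ?thesis unfolding B0v Q_def by (simp add: add.assoc)
    qed
    moreover have "B1.Sinf = r/3 + (10*E^2 - 3*E - 7) / (9 * (2*E^2-1))"
    proof -
      have "r/3 + (10*E^2 - 3*E - 7) / (9 * (2*E^2-1)) = (3*r*(2*E^2-1) + (10*E^2 - 3*E - 7)) / (9 * (2*E^2-1))"
        by (rule gen3) (use E2 in simp)
      then show ?thesis unfolding B1v Q'_def by (simp add: algebra_simps)
    qed
    ultimately show ?thesis by linarith
  qed

  have TRev: "eventually (\<lambda>N. \<theta> * ((x+y)^2/2 * (Rn \<rho> T \<theta> N / (Sn \<rho> T \<theta> N)^2)
                                + (x-y)^2/2 * (Ro \<rho> T \<theta> N / (So \<rho> T \<theta> N)^2)) = TR \<rho> T \<theta> x y N) sequentially"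
    using eventually_gt_at_top[of 0] by eventually_elim (simp add: TR_formula[OF assms(1,2) _ th0])
  have TRlim: "(\<lambda>N. TR \<rho> T \<theta> x y N) \<longlonglongrightarrow>
      \<theta> * ((x+y)^2/2 * (A.Rinf / (A.Sinf)^2)
        + (x-y)^2/2 * ((1 / ((1/2 + 2*\<theta>)^2 * (1 - (((1/2 + 2*\<theta>) - 1) / (1/2 + 2*\<theta>))^2))) / (r + 1)^2))"
    by (rule Lim_transform_eventually[OF _ TRev]) (intro tendsto_intros SA RA SoA RoA, use SApos r in auto)
  have TRval: "\<theta> * ((x+y)^2/2 * (A.Rinf / (A.Sinf)^2)
        + (x-y)^2/2 * ((1 / ((1/2 + 2*\<theta>)^2 * (1 - (((1/2 + 2*\<theta>) - 1) / (1/2 + 2*\<theta>))^2))) / (r + 1)^2))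
     = 9 * (x+y)^2 * (1 + 2 * exp (3*\<rho>*T))^2 / (8 * (1 - 2 * exp (3*\<rho>*T) * (5 + 3*\<rho>*T))^2)
           + (x-y)^2 / (8 * (\<rho>*T + 1)^2)"
  proof -
    have P2: "(1 - 2 * E * (5 + 3*r))^2 = P^2" unfolding P_def by (simp add: power2_eq_square algebra_simps)
    have "\<theta> * ((x+y)^2/2 * (A.Rinf / (A.Sinf)^2)
        + (x-y)^2/2 * ((1 / ((1/2 + 2*\<theta>)^2 * (1 - (((1/2 + 2*\<theta>) - 1) / (1/2 + 2*\<theta>))^2))) / (r + 1)^2))
      = (x+y)^2/2 * ((\<theta> * A.Rinf) / (A.Sinf)^2)
        + (x-y)^2/2 * ((\<theta> * (1 / ((1/2 + 2*\<theta>)^2 * (1 - (((1/2 + 2*\<theta>) - 1) / (1/2 + 2*\<theta>))^2)))) / (r + 1)^2)"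
      by (simp add: algebra_simps)
    also have "\<dots> = (x+y)^2/2 * ((1 + 2*E)^2 / (144 * E^2) / (P / (18 * E))^2) + (x-y)^2/2 * (1/4 / (r + 1)^2)"
      unfolding RAv ROv SAv ..
    also have "\<dots> = 9 * (x+y)^2 * (1 + 2*E)^2 / (8 * P^2) + (x-y)^2 / (8 * (r + 1)^2)"
      by (rule TR_alg[OF E0 P r])
    finally show ?thesis unfolding rT E_def[symmetric] P2 .
  qed

  define F where "F N = TR \<rho> T \<theta> x y N - TC \<rho> T \<theta> s0 x y N" for N
  define G where "G S0 S R = (x+y)^2 * (1 / (3 * S0) - 1 / (3 * S) + 2 * \<theta> * R / (3 * S^2))" for S0 S R :: real
  have Fsub: "(\<lambda>n. F (j n)) \<longlonglongrightarrow> G S0l A.Sinf A.Rinf"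
    if j: "strict_mono j" and S0l: "(\<lambda>n. Sn \<rho> T 0 (j n)) \<longlonglongrightarrow> S0l" and S0p: "S0l > 0" for j S0l
  proof -
    have fj: "filterlim j sequentially sequentially" by (rule filterlim_subseq[OF j])
    have SAj: "(\<lambda>n. Sn \<rho> T \<theta> (j n)) \<longlonglongrightarrow> A.Sinf" using filterlim_compose[OF SA fj] .
    have RAj: "(\<lambda>n. Rn \<rho> T \<theta> (j n)) \<longlonglongrightarrow> A.Rinf" using filterlim_compose[OF RA fj] .
    have ev1: "eventually (\<lambda>n. Sn \<rho> T \<theta> (j n) \<noteq> 0) sequentially"
      using SAj SApos by (intro tendsto_imp_eventually_ne) auto
    have ev2: "eventually (\<lambda>n. Sn \<rho> T 0 (j n) \<noteq> 0) sequentially"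
      using S0l S0p by (intro tendsto_imp_eventually_ne) auto
    have ev3: "eventually (\<lambda>n. j n > 0) sequentially"
      using filterlim_iff[THEN iffD1, OF fj, rule_format, OF eventually_gt_at_top[of 0]] by simp
    have evG: "eventually (\<lambda>n. G (Sn \<rho> T 0 (j n)) (Sn \<rho> T \<theta> (j n)) (Rn \<rho> T \<theta> (j n)) = F (j n)) sequentially"
      using ev1 ev2 ev3
    proof eventually_elim
      case (elim n)
      show ?case unfolding F_def G_def
        by (rule TRTC_formula[OF assms(1,2) elim(3) th0 elim(1) elim(2), symmetric])
    qed
    have limG: "(\<lambda>n. G (Sn \<rho> T 0 (j n)) (Sn \<rho> T \<theta> (j n)) (Rn \<rho> T \<theta> (j n))) \<longlonglongrightarrow> G S0l A.Sinf A.Rinf"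
      unfolding G_def by (intro tendsto_intros S0l SAj RAj) (use S0p SApos in auto)
    show ?thesis by (rule Lim_transform_eventually[OF limG evG])
  qed
  have Fe: "(\<lambda>n. F (2*n)) \<longlonglongrightarrow> G B0.Sinf A.Sinf A.Rinf"
    by (rule Fsub[OF sm2(1) S0e S0epos])
  have Fo: "(\<lambda>n. F (2*n+1)) \<longlonglongrightarrow> G B1.Sinf A.Sinf A.Rinf"
    by (rule Fsub[OF sm2(2) S0o S0opos])
  have GG: "G B0.Sinf A.Sinf A.Rinf \<le> G B1.Sinf A.Sinf A.Rinf"
  proof -
    have "1 / (3 * B0.Sinf) \<le> 1 / (3 * B1.Sinf)" using cmp S0opos by (simp add: frac_le)
    then show ?thesis unfolding G_def by (intro mult_left_mono) auto
  qed
  have LIM: "liminf (\<lambda>N. ereal (F N)) = ereal (G B0.Sinf A.Sinf A.Rinf)"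
    by (rule liminf_two[OF Fe Fo GG])
  have Lval: "G B0.Sinf A.Sinf A.Rinf = L"
  proof -
    have "G B0.Sinf A.Sinf A.Rinf = (x+y)^2 * (1 / (3 * (Q / (9 * (2*E^2+1)))) - 1 / (3 * (P / (18 * E)))
        + 2 * ((1 + 2*E)^2 / (144 * E^2)) / (3 * (P / (18*E))^2))"
      unfolding G_def B0v SAv[symmetric] RAv[symmetric] by (simp add: mult.assoc)
    also have "\<dots> = (x+y)^2 * (3 * (2 * E + 1)^2 * (3 * (r + 3) + 2 * E^2 * (3*r + 5) - E * (12*r + 19))
      / (2 * (1 - 2 * E * (3*r + 5))^2 * (3*r + E + 2 * E^2 * (3*r + 5) + 7)))"
      unfolding P_def Q_def by (subst L_ident[OF E1 r]) (rule refl)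
    also have "\<dots> = L" unfolding L_def e6 rT E_def[symmetric] by (simp add: mult_ac)
    finally show ?thesis .
  qed
  have Lpos: "L \<ge> 0 \<and> (x \<noteq> - y \<longrightarrow> L > 0)"
  proof -
    have n: "3 * (r + 3) + 2 * E^2 * (3*r + 5) - E * (12*r + 19) > 0" by (rule L_pos[OF Ege r])
    have d1: "(1 - 2 * E * (3*r + 5))^2 > 0"
    proof -
      have "2 * E * (3*r + 5) = 6*r*E + 10*E" by (simp add: algebra_simps)
      then have "2 * E * (3*r + 5) > 1" using rE E1 by linarith
      then show ?thesis by simp
    qed
    have d2: "3*r + E + 2 * E^2 * (3*r + 5) + 7 > 0" using E0 r by (simp add: add_pos_pos)
    define qv where "qv = 3 * (2 * E + 1)^2 * (3 * (r + 3) + 2 * E^2 * (3*r + 5) - E * (12*r + 19))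
      / (2 * (1 - 2 * E * (3*r + 5))^2 * (3*r + E + 2 * E^2 * (3*r + 5) + 7))"
    have Lf: "L = (x+y)^2 * qv"
      unfolding L_def e6 rT E_def[symmetric] qv_def by (simp add: mult_ac)
    have q: "qv > 0" unfolding qv_def
      using n d1 d2 E0 by (intro divide_pos_pos mult_pos_pos) auto
    have "x \<noteq> - y \<Longrightarrow> (x+y)^2 > 0" by (simp add: add_eq_0_iff)
    then show ?thesis unfolding Lf using q by (auto intro!: mult_pos_pos)
  qed
  show ?thesis using TRlim TRval LIM Lval Lpos by (simp add: F_def)
qed


end
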